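(* If the sequent $\Phi\Rightarrow\Psi$ has a co-proof in $\mathsf{K}\mu_\omega$, then $\bigwedge\Phi\to\bigvee\Psi$ is valid, i.e. every model satisfying (at its root) all formulas of $\Phi$ satisfies some formula of $\Psi$.
   Context: Formulas ($\mathsf{L}_\mu$): built from variables $x$ and negated variables $\neg x$ (literals) by $\square\alpha$, $\diamond\alpha$, $\bigwedge\Gamma$, $\bigvee\Gamma$ ($\Gamma$ finite), $\mu\phi$, $\nu\phi$ where $\phi=\lambda x.\alpha$ with $\neg x$ not occurring in $\alpha$; $\phi\beta:=\alpha[x:=\beta]$; $\top=\bigwedge\emptyset$, $\bot=\bigvee\emptyset$; $\alpha^\bot$ is the dual (negation) obtained by swapping $x/\neg x$, $\bigwedge/\bigvee$, $\square/\diamond$, $\mu/\nu$ (with $(\mu\lambda x.\alpha)^\bot=\nu\lambda x.(\alpha[x:=\neg x])^\bot$). Semantics: standard semantics over tree-shaped Kripke models (a tree with a valuation of variables at each node), $\neg x$ true where $x$ is false, modalities over children, $\mu,\nu$ least/greatest fixed points; valid = true at the root of every model. Immediate subformula $\alpha\rhd\beta$: $\beta\in\Gamma$ for $\alpha=\bigwedge\Gamma,\bigvee\Gamma$; $\alpha=\square\beta,\diamond\beta$; or $\alpha=\sigma\phi$, $\beta=\phi(\sigma\phi)$. A thread is a sequence with $\alpha_i\rhd\alpha_{i+1}$. Complexity: literals $0$, $\mathrm{rk}(\triangle\alpha)=\mathrm{rk}(\alpha)+1$, $\mathrm{rk}(\bigcirc\Gamma)=\max_{\gamma\in\Gamma}\mathrm{rk}(\gamma)+1$,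 $\mathrm{rk}(\sigma\lambda x.\alpha)=\mathrm{rk}(\alpha)+1$. In an infinite thread the formulas occurring infinitely often have a unique one of minimal complexity, of form $\sigma\phi$; the thread is a $\nu$-thread if $\sigma=\nu$, else a $\mu$-thread. Sequents $\Phi\Rightarrow\Psi$ have finite sequences of formulas on each side. Rules of the calculus: structural rules exchange, contraction, weakening on either side; logical rules: ($\bigwedge$L) from $\gamma,\Phi\Rightarrow\Psi$ infer $\bigwedge\Gamma,\Phi\Rightarrow\Psi$ ($\gamma\in\Gamma$); ($\bigvee$L) from all $\gamma,\Phi\Rightarrow\Psi$ ($\gamma\in\Gamma$) infer $\bigvee\Gamma,\Phi\Rightarrow\Psi$; ($\sigma$L) from $\phi(\sigma\phi),\Phi\Rightarrow\Psi$ infer $\sigma\phi,\Phi\Rightarrow\Psi$; ($\diamond$L) from $\alpha,\Phi\Rightarrow\Psi$ infer $\diamond\alpha,\square\Phi\Rightarrow\diamond\Psi$; ($\bigwedge$R) from all $\Phi\Rightarrow\Psi,\gamma$ infer $\Phi\Rightarrow\Psi,\bigwedge\Gamma$; ($\bigvee$R) from $\Phi\Rightarrow\Psi,\gamma$ ($\gamma\in\Gamma$) infer $\Phi\Rightarrow\Psi,\bigvee\Gamma$; ($\sigma$R) from $\Phi\Rightarrow\Psi,\phi(\sigma\phi)$ infer $\Phi\Rightarrow\Psi,\sigma\phi$; ($\square$R) from $\Phi\Rightarrow\Psi,\alpha$ infer $\square\Phi\Rightarrow\diamond\Psi,\square\alpha$; axioms $x,\neg x\Rightarrow$, $\Rightarrow\neg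 x,x$ and $x\Rightarrow x$ for variables $x$. In each logical rule the displayed compound formula in the conclusion is principal and the displayed immediate subformula in a premise is minor. A trace along a branch of a derivation follows a formula occurrence upward: through a logical rule a principal occurrence moves to the minor occurrence and side occurrences move to their copies; through structural rules occurrences move to the corresponding occurrences. The thread supported by a trace records the formula each time it moves through a principal position (so consecutive formulas satisfy $\rhd$). A co-proof in $\mathsf{K}\mu_\omega$ is a (possibly infinite) tree of sequents built by these rules, all leaves being axioms, every infinite branch containing infinitely many logical rules, such that every infinite branch carries an infinite trace starting on the left whose thread is a $\mu$-thread or an infinite trace starting on the right whose thread is a $\nu$-thread. *)

theory Defs
  imports Main "HOL-Library.Infinite_Set"
begin

section \<open>Formulas of L_mu (locally nameless representation)\<close>

text \<open>Variables bound by a fixed point binder are de Bruijn indices BVar k; they occur only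
  positively (there is no negated bound variable), which encodes the side condition that
  the negation of the bound variable does not occur in the body.  Finite sets Gamma of
  conjuncts / disjuncts are represented by lists.\<close>

datatype 'v fm =
    Var 'v
  | NVar 'v
  | BVar nat
  | Box "'v fm"
  | Dia "'v fm"
  | Conj "'v fm list"
  | Disj "'v fm list"
  | Mu "'v fm"
  | Nu "'v fm"

fun lc :: "nat \<Rightarrow> 'v fm \<Rightarrow> bool" where
  "lc d (Var x) = True"
| "lc d (NVar x) = True"
| "lc d (BVar k) = (k < d)"
| "lc d (Box a) = lc d a"
| "lc d (Dia a) = lc d a"
| "lc d (Conj G) = (\<forall>g\<in>set G. lc d g)"
| "lc d (Disj G) = (\<forall>g\<in>set G. lc d g)"
| "lc d (Mu a) = lc (Suc d) a"
| "lc d (Nu a) = lc (Suc d) a"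

text \<open>Substitution of b for the bound variable with index d (b is closed in all uses).\<close>
fun subst :: "nat \<Rightarrow> 'v fm \<Rightarrow> 'v fm \<Rightarrow> 'v fm" where
  "subst d b (Var x) = Var x"
| "subst d b (NVar x) = NVar x"
| "subst d b (BVar k) = (if k = d then b else BVar k)"
| "subst d b (Box a) = Box (subst d b a)"
| "subst d b (Dia a) = Dia (subst d b a)"
| "subst d b (Conj G) = Conj (map (subst d b) G)"
| "subst d b (Disj G) = Disj (map (subst d b) G)"
| "subst d b (Mu a) = Mu (subst (Suc d) b a)"
| "subst d b (Nu a) = Nu (subst (Suc d) b a)"

fun unfold :: "'v fm \<Rightarrow> 'v fm" where
  "unfold (Mu a) = subst 0 (Mu a) a"
| "unfold (Nu a) = subst 0 (Nu a) a"
| "unfold f = f"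

text \<open>Complexity (rank); the max over the empty set is taken to be 0.\<close>
fun rk :: "'v fm \<Rightarrow> nat" where
  "rk (Var x) = 0"
| "rk (NVar x) = 0"
| "rk (BVar k) = 0"
| "rk (Box a) = Suc (rk a)"
| "rk (Dia a) = Suc (rk a)"
| "rk (Conj G) = Suc (fold max (map rk G) 0)"
| "rk (Disj G) = Suc (fold max (map rk G) 0)"
| "rk (Mu a) = Suc (rk a)"
| "rk (Nu a) = Suc (rk a)"

section \<open>Semantics over tree-shaped Kripke models\<close>

text \<open>A tree is a nonempty prefix-closed set of words over an arbitrary type 'n; the root is [],
  the children of w are the words w@[c] in the tree.\<close>
definition tree_model :: "'n list set \<Rightarrow> bool" where
  "tree_model T \<longleftrightarrow> [] \<in> T \<and> (\<forall>w c. w @ [c] \<in> T \<longrightarrow> w \<in> T)"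

fun sem :: "'n list set \<Rightarrow> ('n list \<Rightarrow> 'v \<Rightarrow> bool) \<Rightarrow> (nat \<Rightarrow> 'n list set) \<Rightarrow> 'v fm \<Rightarrow> 'n list set" where
  "sem T V \<rho> (Var x) = {w \<in> T. V w x}"
| "sem T V \<rho> (NVar x) = {w \<in> T. \<not> V w x}"
| "sem T V \<rho> (BVar k) = \<rho> k \<inter> T"
| "sem T V \<rho> (Box a) = {w \<in> T. \<forall>c. w @ [c] \<in> T \<longrightarrow> w @ [c] \<in> sem T V \<rho> a}"
| "sem T V \<rho> (Dia a) = {w \<in> T. \<exists>c. w @ [c] \<in> T \<and> w @ [c] \<in> sem T V \<rho> a}"
| "sem T V \<rho> (Conj G) = {w \<in> T. \<forall>g\<in>set G. w \<in> sem T V \<rho> g}"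
| "sem T V \<rho> (Disj G) = {w \<in> T. \<exists>g\<in>set G. w \<in> sem T V \<rho> g}"
| "sem T V \<rho> (Mu a) = lfp (\<lambda>X. sem T V (case_nat X \<rho>) a)"
| "sem T V \<rho> (Nu a) = gfp (\<lambda>X. sem T V (case_nat X \<rho>) a)"

definition holds_root :: "'n list set \<Rightarrow> ('n list \<Rightarrow> 'v \<Rightarrow> bool) \<Rightarrow> 'v fm \<Rightarrow> bool" where
  "holds_root T V f \<longleftrightarrow> [] \<in> sem T V (\<lambda>_. {}) f"

section \<open>The calculus K mu omega\<close>

type_synonym 'v seq = "'v fm list \<times> 'v fm list"

text \<open>Rule labels.  Displayed formulas are the first formula of the antecedent and the last
  formula of the succedent; exchange of adjacent positions makes this no restriction.\<close>
datatype rule =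
    Ax | ExL nat | ExR nat | CtrL | CtrR | WkL | WkR
  | AndL nat | OrL | FixL | DiaL | AndR | OrR nat | FixR | BoxR

fun is_logical :: "rule \<Rightarrow> bool" where
  "is_logical Ax = False"
| "is_logical (ExL i) = False"
| "is_logical (ExR i) = False"
| "is_logical CtrL = False"
| "is_logical CtrR = False"
| "is_logical WkL = False"
| "is_logical WkR = False"
| "is_logical r = True"

definition swap_at :: "nat \<Rightarrow> 'a list \<Rightarrow> 'a list" where
  "swap_at i xs = xs[i := xs ! Suc i, Suc i := xs ! i]"

definition is_fix :: "'v fm \<Rightarrow> bool" where
  "is_fix f \<longleftrightarrow> (\<exists>a. f = Mu a \<or> f = Nu a)"

fun rule_inst :: "rule \<Rightarrow> 'v seq \<Rightarrow> 'v seq list \<Rightarrow> bool" where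
  "rule_inst Ax (\<Phi>, \<Psi>) Ss \<longleftrightarrow> Ss = [] \<and>
     (\<exists>x. (\<Phi>, \<Psi>) = ([Var x, NVar x], []) \<or> (\<Phi>, \<Psi>) = ([], [NVar x, Var x])
        \<or> (\<Phi>, \<Psi>) = ([Var x], [Var x]))"
| "rule_inst (ExL i) (\<Phi>, \<Psi>) Ss \<longleftrightarrow> Suc i < length \<Phi> \<and> Ss = [(swap_at i \<Phi>, \<Psi>)]"
| "rule_inst (ExR i) (\<Phi>, \<Psi>) Ss \<longleftrightarrow> Suc i < length \<Psi> \<and> Ss = [(\<Phi>, swap_at i \<Psi>)]"
| "rule_inst CtrL (\<Phi>, \<Psi>) Ss \<longleftrightarrow> (\<exists>a \<Phi>'. \<Phi> = a # \<Phi>' \<and> Ss = [(a # a # \<Phi>', \<Psi>)])"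
| "rule_inst CtrR (\<Phi>, \<Psi>) Ss \<longleftrightarrow> (\<exists>a \<Psi>'. \<Psi> = \<Psi>' @ [a] \<and> Ss = [(\<Phi>, \<Psi>' @ [a, a])])"
| "rule_inst WkL (\<Phi>, \<Psi>) Ss \<longleftrightarrow> (\<exists>a \<Phi>'. \<Phi> = a # \<Phi>' \<and> Ss = [(\<Phi>', \<Psi>)])"
| "rule_inst WkR (\<Phi>, \<Psi>) Ss \<longleftrightarrow> (\<exists>a \<Psi>'. \<Psi> = \<Psi>' @ [a] \<and> Ss = [(\<Phi>, \<Psi>')])"
| "rule_inst (AndL k) (\<Phi>, \<Psi>) Ss \<longleftrightarrow>
     (\<exists>G \<Phi>'. \<Phi> = Conj G # \<Phi>' \<and> k < length G \<and> Ss = [(G ! k # \<Phi>', \<Psi>)])"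
| "rule_inst OrL (\<Phi>, \<Psi>) Ss \<longleftrightarrow>
     (\<exists>G \<Phi>'. \<Phi> = Disj G # \<Phi>' \<and> Ss = map (\<lambda>g. (g # \<Phi>', \<Psi>)) G)"
| "rule_inst FixL (\<Phi>, \<Psi>) Ss \<longleftrightarrow>
     (\<exists>f \<Phi>'. \<Phi> = f # \<Phi>' \<and> is_fix f \<and> Ss = [(unfold f # \<Phi>', \<Psi>)])"
| "rule_inst DiaL (\<Phi>, \<Psi>) Ss \<longleftrightarrow>
     (\<exists>a \<Phi>' \<Psi>'. \<Phi> = Dia a # map Box \<Phi>' \<and> \<Psi> = map Dia \<Psi>' \<and> Ss = [(a # \<Phi>', \<Psi>')])"
| "rule_inst AndR (\<Phi>, \<Psi>) Ss \<longleftrightarrow>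
     (\<exists>G \<Psi>'. \<Psi> = \<Psi>' @ [Conj G] \<and> Ss = map (\<lambda>g. (\<Phi>, \<Psi>' @ [g])) G)"
| "rule_inst (OrR k) (\<Phi>, \<Psi>) Ss \<longleftrightarrow>
     (\<exists>G \<Psi>'. \<Psi> = \<Psi>' @ [Disj G] \<and> k < length G \<and> Ss = [(\<Phi>, \<Psi>' @ [G ! k])])"
| "rule_inst FixR (\<Phi>, \<Psi>) Ss \<longleftrightarrow>
     (\<exists>f \<Psi>'. \<Psi> = \<Psi>' @ [f] \<and> is_fix f \<and> Ss = [(\<Phi>, \<Psi>' @ [unfold f])])"
| "rule_inst BoxR (\<Phi>, \<Psi>) Ss \<longleftrightarrow>
     (\<exists>a \<Phi>' \<Psi>'. \<Phi> = map Box \<Phi>' \<and> \<Psi> = map Dia \<Psi>' @ [Box a] \<and> Ss = [(\<Phi>', \<Psi>' @ [a])])"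

text \<open>Formula occurrences: (True, j) is position j of the antecedent, (False, j) position j of
  the succedent.\<close>
type_synonym occ = "bool \<times> nat"

fun valid_occ :: "'v seq \<Rightarrow> occ \<Rightarrow> bool" where
  "valid_occ (\<Phi>, \<Psi>) (l, j) = (if l then j < length \<Phi> else j < length \<Psi>)"

fun fm_at :: "'v seq \<Rightarrow> occ \<Rightarrow> 'v fm" where
  "fm_at (\<Phi>, \<Psi>) (l, j) = (if l then \<Phi> ! j else \<Psi> ! j)"

text \<open>link r S o oc': occurrence o in the conclusion S of rule r moves (upwards) to occurrence oc'
  in (each) premise.  In the logical rules positions are preserved (principal goes to minor,
  side formulas to their copies).\<close>
fun link :: "rule \<Rightarrow> 'v seq \<Rightarrow> occ \<Rightarrow> occ \<Rightarrow> bool" where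
  "link Ax S oc oc' = False"
| "link (ExL i) S (l, j) oc' =
     (if l then oc' = (True, if j = i then Suc i else if j = Suc i then i else j) else oc' = (False, j))"
| "link (ExR i) S (l, j) oc' =
     (if l then oc' = (True, j) else oc' = (False, if j = i then Suc i else if j = Suc i then i else j))"
| "link CtrL S (l, j) oc' =
     (if l then (if j = 0 then oc' = (True, 0) \<or> oc' = (True, 1) else oc' = (True, Suc j))
      else oc' = (False, j))"
| "link CtrR (\<Phi>, \<Psi>) (l, j) oc' =
     (if l then oc' = (True, j)
      else if j = length \<Psi> - 1 then oc' = (False, j) \<or> oc' = (False, Suc j) else oc' = (False, j))"
| "link WkL S (l, j) oc' = (if l then j \<noteq> 0 \<and> oc' = (True, j - 1) else oc' = (False, j))"
| "link WkR (\<Phi>, \<Psi>) (l, j) oc' = (if l then oc' = (True, j) else j \<noteq> length \<Psi> - 1 \<and> oc' = (False, j))"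
| "link r S oc oc' = (oc' = oc)"

text \<open>Principal occurrences.  In the modal rules all displayed modal formulas of the conclusion
  are treated as principal (so that recorded threads respect the immediate-subformula relation).\<close>
fun principal :: "rule \<Rightarrow> 'v seq \<Rightarrow> occ \<Rightarrow> bool" where
  "principal (AndL k) S oc = (oc = (True, 0))"
| "principal OrL S oc = (oc = (True, 0))"
| "principal FixL S oc = (oc = (True, 0))"
| "principal AndR (\<Phi>, \<Psi>) oc = (oc = (False, length \<Psi> - 1))"
| "principal (OrR k) (\<Phi>, \<Psi>) oc = (oc = (False, length \<Psi> - 1))"
| "principal FixR (\<Phi>, \<Psi>) oc = (oc = (False, length \<Psi> - 1))"
| "principal DiaL S oc = True"
| "principal BoxR S oc = True"
| "principal r S oc = False"

codatatype 'v dtree = Node (lab: "'v seq \<times> rule") (kids: "'v dtree list")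

definition sq :: "'v dtree \<Rightarrow> 'v seq" where "sq t = fst (lab t)"
definition rl :: "'v dtree \<Rightarrow> rule" where "rl t = snd (lab t)"

inductive_set subtrees :: "'v dtree \<Rightarrow> 'v dtree set" for t where
  self: "t \<in> subtrees t"
| kid: "s \<in> subtrees t \<Longrightarrow> u \<in> set (kids s) \<Longrightarrow> u \<in> subtrees t"

text \<open>Every node is a correct rule instance whose premises are exactly its children
  (so every leaf is a premise-free rule instance, i.e. an axiom).\<close>
definition wf_tree :: "'v dtree \<Rightarrow> bool" where
  "wf_tree t \<longleftrightarrow> (\<forall>s \<in> subtrees t. rule_inst (rl s) (sq s) (map sq (kids s)))"

definition is_branch :: "'v dtree \<Rightarrow> (nat \<Rightarrow> 'v dtree) \<Rightarrow> bool" where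
  "is_branch t b \<longleftrightarrow> b 0 = t \<and> (\<forall>n. b (Suc n) \<in> set (kids (b n)))"

definition is_trace :: "(nat \<Rightarrow> 'v dtree) \<Rightarrow> nat \<Rightarrow> (nat \<Rightarrow> occ) \<Rightarrow> bool" where
  "is_trace b k oc \<longleftrightarrow> (\<forall>n. valid_occ (sq (b (k + n))) (oc n) \<and>
       link (rl (b (k + n))) (sq (b (k + n))) (oc n) (oc (Suc n)))"

definition princ_step :: "(nat \<Rightarrow> 'v dtree) \<Rightarrow> nat \<Rightarrow> (nat \<Rightarrow> occ) \<Rightarrow> nat \<Rightarrow> bool" where
  "princ_step b k oc n \<longleftrightarrow> principal (rl (b (k + n))) (sq (b (k + n))) (oc n)"

text \<open>The thread supported by the trace is the sequence of formulas at principal steps; it is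
  infinite iff there are infinitely many principal steps.  inf_forms is the set of formulas
  occurring infinitely often in the thread.\<close>
definition inf_thread :: "(nat \<Rightarrow> 'v dtree) \<Rightarrow> nat \<Rightarrow> (nat \<Rightarrow> occ) \<Rightarrow> bool" where
  "inf_thread b k oc \<longleftrightarrow> (\<exists>\<^sub>\<infinity>n. princ_step b k oc n)"

definition inf_forms :: "(nat \<Rightarrow> 'v dtree) \<Rightarrow> nat \<Rightarrow> (nat \<Rightarrow> occ) \<Rightarrow> 'v fm set" where
  "inf_forms b k oc = {f. \<exists>\<^sub>\<infinity>n. princ_step b k oc n \<and> fm_at (sq (b (k + n))) (oc n) = f}"

definition min_is_mu :: "'v fm set \<Rightarrow> bool" where
  "min_is_mu F \<longleftrightarrow> (\<exists>a. Mu a \<in> F \<and> (\<forall>g\<in>F. g \<noteq> Mu a \<longrightarrow> rk (Mu a) < rk g))"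

definition min_is_nu :: "'v fm set \<Rightarrow> bool" where
  "min_is_nu F \<longleftrightarrow> (\<exists>a. Nu a \<in> F \<and> (\<forall>g\<in>F. g \<noteq> Nu a \<longrightarrow> rk (Nu a) < rk g))"

definition mu_thread :: "(nat \<Rightarrow> 'v dtree) \<Rightarrow> nat \<Rightarrow> (nat \<Rightarrow> occ) \<Rightarrow> bool" where
  "mu_thread b k oc \<longleftrightarrow> inf_thread b k oc \<and> min_is_mu (inf_forms b k oc)"

definition nu_thread :: "(nat \<Rightarrow> 'v dtree) \<Rightarrow> nat \<Rightarrow> (nat \<Rightarrow> occ) \<Rightarrow> bool" where
  "nu_thread b k oc \<longleftrightarrow> inf_thread b k oc \<and> min_is_nu (inf_forms b k oc)"

definition good_branch :: "(nat \<Rightarrow> 'v dtree) \<Rightarrow> bool" where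
  "good_branch b \<longleftrightarrow> (\<exists>k oc. is_trace b k oc \<and>
      ((fst (oc 0) \<and> mu_thread b k oc) \<or> (\<not> fst (oc 0) \<and> nu_thread b k oc)))"

definition coproof :: "'v dtree \<Rightarrow> bool" where
  "coproof t \<longleftrightarrow> wf_tree t \<and>
     (\<forall>b. is_branch t b \<longrightarrow> (\<exists>\<^sub>\<infinity>n. is_logical (rl (b n))) \<and> good_branch b)"

definition has_coproof :: "'v seq \<Rightarrow> bool" where
  "has_coproof S \<longleftrightarrow> (\<exists>t. sq t = S \<and> coproof t)"

end

theory Submission
  imports Defs
begin

datatype 'i ap = AZ | AS "'i ap" | AL "'i \<Rightarrow> 'i ap"

datatype ('v,'i) af =
    AV 'v | AN 'v | AB nat | ABox "('v,'i) af" | ADia "('v,'i) af"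
  | AConj "('v,'i) af list" | ADisj "('v,'i) af list"
  | AMu "('v,'i) af" | ANu "('v,'i) af"
  | AMuA "'i ap" "('v,'i) af" | ANuA "'i ap" "('v,'i) af"

fun erase :: "('v,'i) af \<Rightarrow> 'v fm" where
  "erase (AV x) = Var x"
| "erase (AN x) = NVar x"
| "erase (AB k) = BVar k"
| "erase (ABox a) = Box (erase a)"
| "erase (ADia a) = Dia (erase a)"
| "erase (AConj G) = Conj (map erase G)"
| "erase (ADisj G) = Disj (map erase G)"
| "erase (AMu a) = Mu (erase a)"
| "erase (ANu a) = Nu (erase a)"
| "erase (AMuA d a) = Mu (erase a)"
| "erase (ANuA d a) = Nu (erase a)"

fun emb :: "'v fm \<Rightarrow> ('v,'i) af" where
  "emb (Var x) = AV x"
| "emb (NVar x) = AN x"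
| "emb (BVar k) = AB k"
| "emb (Box a) = ABox (emb a)"
| "emb (Dia a) = ADia (emb a)"
| "emb (Conj G) = AConj (map emb G)"
| "emb (Disj G) = ADisj (map emb G)"
| "emb (Mu a) = AMu (emb a)"
| "emb (Nu a) = ANu (emb a)"

fun asubst :: "nat \<Rightarrow> ('v,'i) af \<Rightarrow> ('v,'i) af \<Rightarrow> ('v,'i) af" where
  "asubst d b (AV x) = AV x"
| "asubst d b (AN x) = AN x"
| "asubst d b (AB k) = (if k = d then b else AB k)"
| "asubst d b (ABox a) = ABox (asubst d b a)"
| "asubst d b (ADia a) = ADia (asubst d b a)"
| "asubst d b (AConj G) = AConj (map (asubst d b) G)"
| "asubst d b (ADisj G) = ADisj (map (asubst d b) G)"
| "asubst d b (AMu a) = AMu (asubst (Suc d) b a)"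
| "asubst d b (ANu a) = ANu (asubst (Suc d) b a)"
| "asubst d b (AMuA e a) = AMuA e (asubst (Suc d) b a)"
| "asubst d b (ANuA e a) = ANuA e (asubst (Suc d) b a)"

fun afree :: "nat \<Rightarrow> ('v,'i) af \<Rightarrow> bool" where
  "afree d (AV x) = False"
| "afree d (AN x) = False"
| "afree d (AB k) = (k = d)"
| "afree d (ABox a) = afree d a"
| "afree d (ADia a) = afree d a"
| "afree d (AConj G) = (\<exists>g\<in>set G. afree d g)"
| "afree d (ADisj G) = (\<exists>g\<in>set G. afree d g)"
| "afree d (AMu a) = afree (Suc d) a"
| "afree d (ANu a) = afree (Suc d) a"
| "afree d (AMuA e a) = afree (Suc d) a"
| "afree d (ANuA e a) = afree (Suc d) a"

fun asub :: "('v,'i) af \<Rightarrow> ('v,'i) af set" where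
  "asub (ABox a) = insert (ABox a) (asub a)"
| "asub (ADia a) = insert (ADia a) (asub a)"
| "asub (AConj G) = insert (AConj G) (\<Union>g\<in>set G. asub g)"
| "asub (ADisj G) = insert (ADisj G) (\<Union>g\<in>set G. asub g)"
| "asub (AMu a) = insert (AMu a) (asub a)"
| "asub (ANu a) = insert (ANu a) (asub a)"
| "asub (AMuA e a) = insert (AMuA e a) (asub a)"
| "asub (ANuA e a) = insert (ANuA e a) (asub a)"
| "asub f = {f}"

fun sub :: "'v fm \<Rightarrow> 'v fm set" where
  "sub (Box a) = insert (Box a) (sub a)"
| "sub (Dia a) = insert (Dia a) (sub a)"
| "sub (Conj G) = insert (Conj G) (\<Union>g\<in>set G. sub g)"
| "sub (Disj G) = insert (Disj G) (\<Union>g\<in>set G. sub g)"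
| "sub (Mu a) = insert (Mu a) (sub a)"
| "sub (Nu a) = insert (Nu a) (sub a)"
| "sub f = {f}"

lemma self_asub[simp]: "g \<in> asub g"
  by (cases g) auto

lemma self_sub[simp]: "f \<in> sub f"
  by (cases f) auto

lemma asub_trans: "h \<in> asub g \<Longrightarrow> x \<in> asub h \<Longrightarrow> x \<in> asub g"
  by (induction g arbitrary: h) auto

lemma sub_trans: "h \<in> sub g \<Longrightarrow> x \<in> sub h \<Longrightarrow> x \<in> sub g"
  by (induction g arbitrary: h) auto

lemma finite_sub: "finite (sub f)"
  by (induction f) auto

lemma erase_asub: "h \<in> asub g \<Longrightarrow> erase h \<in> sub (erase g)"
  by (induction g arbitrary: h) auto

lemma size_erase_elem: "g \<in> set G \<Longrightarrow> size (erase g) < Suc (size_list size (map erase G))"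
proof -
  assume "g \<in> set G"
  then have "erase g \<in> set (map erase G)" by simp
  then have "size (erase g) \<le> size_list size (map erase G)"
    by (rule size_list_estimation') simp
  then show ?thesis by simp
qed

lemma size_erase_asub: "h \<in> asub g \<Longrightarrow> h = g \<or> size (erase h) < size (erase g)"
proof (induction g arbitrary: h)
  case (AConj G)
  then show ?case using size_erase_elem[of _ G] by (auto intro: less_trans)
next
  case (ADisj G)
  then show ?case using size_erase_elem[of _ G] by (auto intro: less_trans)
qed (auto simp: less_Suc_eq)

lemma asubst_nofree: "\<not> afree k c \<Longrightarrow> asubst k P c = c"
  by (induction c arbitrary: k) (auto simp: map_idI)

lemma asubst_free: "afree k c \<Longrightarrow> P \<in> asub (asubst k P c)"
  by (induction c arbitrary: k) auto

lemma asub_size: "x \<in> asub g \<Longrightarrow> size x \<le> size g"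
proof (induction g arbitrary: x)
  case (AConj G)
  then show ?case
    by (auto, meson le_SucI le_trans size_list_estimation')
next
  case (ADisj G)
  then show ?case
    by (auto, meson le_SucI le_trans size_list_estimation')
qed (auto, (meson le_SucI le_trans le_add2)+)

lemma asub_child_ne: "x \<in> asub c \<Longrightarrow> size c < size g \<Longrightarrow> x \<noteq> g"
  using asub_size by fastforce

lemma asub_asubst:
  "h \<in> asub (asubst k P c) \<Longrightarrow> h \<in> asub P \<or> h \<in> asub c \<or> (P \<in> asub h \<and> P \<noteq> h)"
proof (induction c arbitrary: k h)
  case (ABox c)
  show ?case
  proof (cases "afree k c")
    case True
    have "P \<in> asub (asubst k P c)" using asubst_free[OF True] .
    then have "P \<in> asub (ABox (asubst k P c)) \<and> P \<noteq> ABox (asubst k P c)"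
      using asub_child_ne[of P "asubst k P c" "ABox (asubst k P c)"] by simp
    then show ?thesis using ABox by auto
  next
    case False
    then show ?thesis using ABox.prems by (simp add: asubst_nofree)
  qed
next
  case (ADia c)
  show ?case
  proof (cases "afree k c")
    case True
    have "P \<in> asub (asubst k P c)" using asubst_free[OF True] .
    then have "P \<in> asub (ADia (asubst k P c)) \<and> P \<noteq> ADia (asubst k P c)"
      using asub_child_ne[of P "asubst k P c" "ADia (asubst k P c)"] by simp
    then show ?thesis using ADia by auto
  next
    case False
    then show ?thesis using ADia.prems by (simp add: asubst_nofree)
  qed
next
  case (AMu c)
  show ?case
  proof (cases "afree (Suc k) c")
    case True
    have "P \<in> asub (asubst (Suc k) P c)" using asubst_free[OF True] .
    then have "P \<in> asub (AMu (asubst (Suc k) P c)) \<and> P \<noteq> AMu (asubst (Suc k) P c)"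
      using asub_child_ne[of P "asubst (Suc k) P c" "AMu (asubst (Suc k) P c)"] by simp
    then show ?thesis using AMu by auto
  next
    case False
    then show ?thesis using AMu.prems by (simp add: asubst_nofree)
  qed
next
  case (ANu c)
  show ?case
  proof (cases "afree (Suc k) c")
    case True
    have "P \<in> asub (asubst (Suc k) P c)" using asubst_free[OF True] .
    then have "P \<in> asub (ANu (asubst (Suc k) P c)) \<and> P \<noteq> ANu (asubst (Suc k) P c)"
      using asub_child_ne[of P "asubst (Suc k) P c" "ANu (asubst (Suc k) P c)"] by simp
    then show ?thesis using ANu by auto
  next
    case False
    then show ?thesis using ANu.prems by (simp add: asubst_nofree)
  qed
next
  case (AMuA e c)
  show ?case
  proof (cases "afree (Suc k) c")
    case True
    have "P \<in> asub (asubst (Suc k) P c)" using asubst_free[OF True] .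
    then have "P \<in> asub (AMuA e (asubst (Suc k) P c)) \<and> P \<noteq> AMuA e (asubst (Suc k) P c)"
      using asub_child_ne[of P "asubst (Suc k) P c" "AMuA e (asubst (Suc k) P c)"] by simp
    then show ?thesis using AMuA by auto
  next
    case False
    then show ?thesis using AMuA.prems by (simp add: asubst_nofree)
  qed
next
  case (ANuA e c)
  show ?case
  proof (cases "afree (Suc k) c")
    case True
    have "P \<in> asub (asubst (Suc k) P c)" using asubst_free[OF True] .
    then have "P \<in> asub (ANuA e (asubst (Suc k) P c)) \<and> P \<noteq> ANuA e (asubst (Suc k) P c)"
      using asub_child_ne[of P "asubst (Suc k) P c" "ANuA e (asubst (Suc k) P c)"] by simp
    then show ?thesis using ANuA by auto
  next
    case False
    then show ?thesis using ANuA.prems by (simp add: asubst_nofree)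
  qed
next
  case (AConj G)
  let ?h = "AConj (map (asubst k P) G)"
  show ?case
  proof (cases "\<exists>g\<in>set G. afree k g")
    case True
    then obtain g where g: "g \<in> set G" "afree k g" by auto
    have Pg: "P \<in> asub (asubst k P g)" using asubst_free[OF g(2)] .
    moreover have "size (asubst k P g) < size ?h"
      using g(1) by (simp add: le_imp_less_Suc size_list_estimation')
    ultimately have "P \<noteq> ?h" by (rule asub_child_ne)
    moreover have "P \<in> asub ?h" using g(1) Pg by force
    ultimately have Ph: "P \<in> asub ?h \<and> P \<noteq> ?h" by blast
    from AConj.prems have "h = ?h \<or> (\<exists>g\<in>set G. h \<in> asub (asubst k P g))" by auto
    then show ?thesis
    proof
      assume "h = ?h" then show ?thesis using Ph by blast
    next
      assume "\<exists>g\<in>set G. h \<in> asub (asubst k P g)"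
      then obtain g' where g': "g' \<in> set G" "h \<in> asub (asubst k P g')" by blast
      then have "h \<in> asub P \<or> h \<in> asub g' \<or> P \<in> asub h \<and> P \<noteq> h" using AConj.IH by blast
      then show ?thesis using g'(1) by auto
    qed
  next
    case False
    then have "asubst k P (AConj G) = AConj G" by (auto intro!: map_idI simp: asubst_nofree)
    then show ?thesis using AConj.prems by simp
  qed
next
  case (ADisj G)
  let ?h = "ADisj (map (asubst k P) G)"
  show ?case
  proof (cases "\<exists>g\<in>set G. afree k g")
    case True
    then obtain g where g: "g \<in> set G" "afree k g" by auto
    have Pg: "P \<in> asub (asubst k P g)" using asubst_free[OF g(2)] .
    moreover have "size (asubst k P g) < size ?h"
      using g(1) by (simp add: le_imp_less_Suc size_list_estimation')
    ultimately have "P \<noteq> ?h" by (rule asub_child_ne)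
    moreover have "P \<in> asub ?h" using g(1) Pg by force
    ultimately have Ph: "P \<in> asub ?h \<and> P \<noteq> ?h" by blast
    from ADisj.prems have "h = ?h \<or> (\<exists>g\<in>set G. h \<in> asub (asubst k P g))" by auto
    then show ?thesis
    proof
      assume "h = ?h" then show ?thesis using Ph by blast
    next
      assume "\<exists>g\<in>set G. h \<in> asub (asubst k P g)"
      then obtain g' where g': "g' \<in> set G" "h \<in> asub (asubst k P g')" by blast
      then have "h \<in> asub P \<or> h \<in> asub g' \<or> P \<in> asub h \<and> P \<noteq> h" using ADisj.IH by blast
      then show ?thesis using g'(1) by auto
    qed
  next
    case False
    then have "asubst k P (ADisj G) = ADisj G" by (auto intro!: map_idI simp: asubst_nofree)
    then show ?thesis using ADisj.prems by simp
  qed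
next
  case (AB x)
  then show ?case by (cases "x = k") simp_all
qed simp_all

lemma erase_asubst: "erase (asubst k P c) = subst k (erase P) (erase c)"
  by (induction c arbitrary: k) auto

lemma erase_emb[simp]: "erase (emb f) = f"
  by (induction f) (auto simp: map_idI)



primrec app :: "('a set \<Rightarrow> 'a set) \<Rightarrow> 'a set ap \<Rightarrow> 'a set" where
  "app F AZ = {}"
| "app F (AS d) = F (app F d)"
| "app F (AL g) = (\<Union>i. app F (g i))"

primrec capp :: "'a set \<Rightarrow> ('a set \<Rightarrow> 'a set) \<Rightarrow> 'a set ap \<Rightarrow> 'a set" where
  "capp T F AZ = T"
| "capp T F (AS d) = F (capp T F d)"
| "capp T F (AL g) = T \<inter> (\<Inter>i. capp T F (g i))"

fun semA :: "'n list set \<Rightarrow> ('n list \<Rightarrow> 'v \<Rightarrow> bool) \<Rightarrow> (nat \<Rightarrow> 'n list set) \<Rightarrow> ('v, 'n list set) af \<Rightarrow> 'n list set" where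
  "semA T V \<rho> (AV x) = {w \<in> T. V w x}"
| "semA T V \<rho> (AN x) = {w \<in> T. \<not> V w x}"
| "semA T V \<rho> (AB k) = \<rho> k \<inter> T"
| "semA T V \<rho> (ABox a) = {w \<in> T. \<forall>c. w @ [c] \<in> T \<longrightarrow> w @ [c] \<in> semA T V \<rho> a}"
| "semA T V \<rho> (ADia a) = {w \<in> T. \<exists>c. w @ [c] \<in> T \<and> w @ [c] \<in> semA T V \<rho> a}"
| "semA T V \<rho> (AConj G) = {w \<in> T. \<forall>g\<in>set G. w \<in> semA T V \<rho> g}"
| "semA T V \<rho> (ADisj G) = {w \<in> T. \<exists>g\<in>set G. w \<in> semA T V \<rho> g}"
| "semA T V \<rho> (AMu a) = lfp (\<lambda>X. semA T V (case_nat X \<rho>) a)"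
| "semA T V \<rho> (ANu a) = gfp (\<lambda>X. semA T V (case_nat X \<rho>) a)"
| "semA T V \<rho> (AMuA d a) = app (\<lambda>X. semA T V (case_nat X \<rho>) a) d"
| "semA T V \<rho> (ANuA d a) = capp T (\<lambda>X. semA T V (case_nat X \<rho>) a) d"

definition apR :: "('i ap \<times> 'i ap) set" where
  "apR = {(d, AS d) | d. True} \<union> {(g i, AL g) | g i. True}"

lemma wf_apR: "wf apR"
proof (rule wfUNIVI)
  fix P :: "'i ap \<Rightarrow> bool" and x
  assume H: "\<forall>x. (\<forall>y. (y, x) \<in> apR \<longrightarrow> P y) \<longrightarrow> P x"
  show "P x"
  proof (induction x)
    case AZ
    have "\<forall>y. (y, AZ) \<in> apR \<longrightarrow> P y" by (simp add: apR_def)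
    then show ?case using H by blast
  next
    case (AS d)
    have "\<forall>y. (y, AS d) \<in> apR \<longrightarrow> P y" using AS.IH by (simp add: apR_def)
    then show ?case using H by blast
  next
    case (AL g)
    have "\<forall>y. (y, AL g) \<in> apR \<longrightarrow> P y" using AL.IH by (auto simp add: apR_def)
    then show ?case using H by blast
  qed
qed

lemma wf_apR_trancl: "wf (apR\<^sup>+)"
  using wf_apR by (rule wf_trancl)

lemma apR_AS: "(d, AS d) \<in> apR\<^sup>+"
  by (rule r_into_trancl) (simp add: apR_def)

lemma apR_AL: "(g i, AL g) \<in> apR"
  unfolding apR_def by blast

lemma app_desc: "w \<in> app F d \<Longrightarrow> \<exists>d'. (d', d) \<in> apR\<^sup>+ \<and> w \<in> F (app F d')"
proof (induction d)
  case AZ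
  then show ?case by simp
next
  case (AS d)
  then show ?case using apR_AS by auto
next
  case (AL g)
  then obtain i where "w \<in> app F (g i)" by auto
  with AL.IH obtain d' where "(d', g i) \<in> apR\<^sup>+" "w \<in> F (app F d')" by blast
  moreover have "(g i, AL g) \<in> apR" by (rule apR_AL)
  ultimately show ?case by (meson trancl_into_trancl)
qed

lemma capp_desc: "w \<in> T \<Longrightarrow> w \<notin> capp T F d \<Longrightarrow> \<exists>d'. (d', d) \<in> apR\<^sup>+ \<and> w \<notin> F (capp T F d')"
proof (induction d)
  case AZ
  then show ?case by simp
next
  case (AS d)
  then show ?case using apR_AS by auto
next
  case (AL g)
  then obtain i where "w \<notin> capp T F (g i)" by auto
  with AL obtain d' where "(d', g i) \<in> apR\<^sup>+" "w \<notin> F (capp T F d')" by blast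
  moreover have "(g i, AL g) \<in> apR" by (rule apR_AL)
  ultimately show ?case by (meson trancl_into_trancl)
qed

lemma lfp_app: assumes "mono F" "w \<in> lfp F" shows "\<exists>d. w \<in> F (app F d)"
proof -
  define U where "U = (\<Union>d. F (app F d))"
  define gall where "gall X = (SOME d. app F d = X)" for X
  have big: "app F d \<subseteq> app F (AL gall)" for d
  proof -
    have "app F (gall (app F d)) = app F d" unfolding gall_def by (rule someI) (rule refl)
    then show ?thesis by force
  qed
  have "U \<subseteq> app F (AL gall)"
    unfolding U_def using big[of "AS _"] by auto
  then have "F U \<subseteq> F (app F (AL gall))" by (rule monoD[OF assms(1)])
  also have "\<dots> \<subseteq> U" unfolding U_def by (rule SUP_upper) simp
  finally have "lfp F \<subseteq> U" by (rule lfp_lowerbound)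
  then show ?thesis using assms(2) unfolding U_def by auto
qed

lemma gfp_capp: assumes "mono F" "w \<notin> gfp F" shows "\<exists>d. w \<notin> F (capp T F d)"
proof -
  define L where "L = (\<Inter>d. F (capp T F d))"
  define gall where "gall X = (SOME d. capp T F d = X)" for X
  have small: "capp T F (AL gall) \<subseteq> capp T F d" for d
  proof -
    have "capp T F (gall (capp T F d)) = capp T F d" unfolding gall_def by (rule someI) (rule refl)
    then show ?thesis by force
  qed
  have "capp T F (AL gall) \<subseteq> L"
    unfolding L_def using small[of "AS _"] by auto
  then have "F (capp T F (AL gall)) \<subseteq> F L" by (rule monoD[OF assms(1)])
  moreover have "L \<subseteq> F (capp T F (AL gall))" unfolding L_def by (rule INF_lower) simp
  ultimately have "L \<subseteq> F L" by blast
  then have "L \<subseteq> gfp F" by (rule gfp_upperbound)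
  then show ?thesis using assms(2) unfolding L_def by auto
qed

lemma app_sub: "(\<And>X. F X \<subseteq> T) \<Longrightarrow> app F d \<subseteq> T"
  by (induction d) auto

lemma capp_sub: "(\<And>X. F X \<subseteq> T) \<Longrightarrow> capp T F d \<subseteq> T"
  by (induction d) auto

lemma semA_sub: "semA T V \<rho> g \<subseteq> T"
proof (induction g arbitrary: \<rho>)
  case (AMu g)
  have "lfp (\<lambda>X. semA T V (case_nat X \<rho>) g) \<subseteq> T"
    by (rule lfp_lowerbound) (use AMu.IH in blast)
  then show ?case by simp
next
  case (ANu g)
  then show ?case by (auto intro!: gfp_least)
next
  case (AMuA d g)
  then show ?case by (simp add: app_sub)
next
  case (ANuA d g)
  then show ?case by (simp add: capp_sub)
qed auto

lemma app_mono: "(\<And>X. F X \<subseteq> G X) \<Longrightarrow> mono G \<Longrightarrow> app F d \<subseteq> app G d"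
proof (induction d)
  case (AS d)
  then show ?case by (simp, meson monoD order_trans)
qed auto

lemma capp_mono: "(\<And>X. F X \<subseteq> G X) \<Longrightarrow> mono G \<Longrightarrow> capp T F d \<subseteq> capp T G d"
proof (induction d)
  case (AS d)
  then show ?case by (simp, meson monoD order_trans)
next
  case (AL g)
  then show ?case by fastforce
qed auto

lemma case_nat_le: "X \<subseteq> Y \<Longrightarrow> (\<forall>k. \<rho> k \<subseteq> \<rho>' k) \<Longrightarrow> (\<forall>k. case_nat X \<rho> k \<subseteq> case_nat Y \<rho>' k)"
  by (auto split: nat.split)

lemma semA_mono: "(\<forall>k. \<rho> k \<subseteq> \<rho>' k) \<Longrightarrow> semA T V \<rho> g \<subseteq> semA T V \<rho>' g"
proof (induction g arbitrary: \<rho> \<rho>')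
  case (ABox g)
  have "semA T V \<rho> g \<subseteq> semA T V \<rho>' g" by (rule ABox.IH[OF ABox.prems])
  then show ?case by auto
next
  case (ADia g)
  have "semA T V \<rho> g \<subseteq> semA T V \<rho>' g" by (rule ADia.IH[OF ADia.prems])
  then show ?case by auto
next
  case (AConj G)
  have "\<forall>g\<in>set G. semA T V \<rho> g \<subseteq> semA T V \<rho>' g"
    using AConj.IH AConj.prems by blast
  then show ?case by auto
next
  case (ADisj G)
  have "\<forall>g\<in>set G. semA T V \<rho> g \<subseteq> semA T V \<rho>' g"
    using ADisj.IH ADisj.prems by blast
  then show ?case by auto
next
  case (AMu g)
  have "semA T V (case_nat X \<rho>) g \<subseteq> semA T V (case_nat X \<rho>') g" for X
    using AMu.IH case_nat_le[OF order_refl AMu.prems] by blast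
  then show ?case by (simp add: lfp_mono)
next
  case (ANu g)
  have "semA T V (case_nat X \<rho>) g \<subseteq> semA T V (case_nat X \<rho>') g" for X
    using ANu.IH case_nat_le[OF order_refl ANu.prems] by blast
  then show ?case by (simp add: gfp_mono)
next
  case (AMuA d g)
  have "semA T V (case_nat X \<rho>) g \<subseteq> semA T V (case_nat X \<rho>') g" for X
    using AMuA.IH case_nat_le[OF order_refl AMuA.prems] by blast
  moreover have "mono (\<lambda>X. semA T V (case_nat X \<rho>') g)"
    by (rule monoI) (use AMuA.IH case_nat_le in blast)
  ultimately show ?case by (simp add: app_mono)
next
  case (ANuA d g)
  have "semA T V (case_nat X \<rho>) g \<subseteq> semA T V (case_nat X \<rho>') g" for X
    using ANuA.IH case_nat_le[OF order_refl ANuA.prems] by blast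
  moreover have "mono (\<lambda>X. semA T V (case_nat X \<rho>') g)"
    by (rule monoI) (use ANuA.IH case_nat_le in blast)
  ultimately show ?case by (simp add: capp_mono)
qed auto

lemma semA_mono_F: "mono (\<lambda>X. semA T V (case_nat X \<rho>) g)"
  by (rule monoI) (rule semA_mono, rule case_nat_le, auto)

lemma semA_lc: "lc d (erase g) \<Longrightarrow> (\<forall>j<d. \<rho> j = \<rho>' j) \<Longrightarrow> semA T V \<rho> g = semA T V \<rho>' g"
proof (induction g arbitrary: d \<rho> \<rho>')
  case (AConj G)
  have "\<forall>g\<in>set G. semA T V \<rho> g = semA T V \<rho>' g"
  proof
    fix g assume g: "g \<in> set G"
    then have "lc d (erase g)" using AConj.prems(1) by simp
    then show "semA T V \<rho> g = semA T V \<rho>' g" using AConj.IH[OF g] AConj.prems(2) by blast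
  qed
  then show ?case by simp
next
  case (ADisj G)
  have "\<forall>g\<in>set G. semA T V \<rho> g = semA T V \<rho>' g"
  proof
    fix g assume g: "g \<in> set G"
    then have "lc d (erase g)" using ADisj.prems(1) by simp
    then show "semA T V \<rho> g = semA T V \<rho>' g" using ADisj.IH[OF g] ADisj.prems(2) by blast
  qed
  then show ?case by simp
next
  case (AMu g)
  have h: "\<forall>j<Suc d. case_nat X \<rho> j = case_nat X \<rho>' j" for X
    using AMu.prems(2) by (auto split: nat.split)
  have "semA T V (case_nat X \<rho>) g = semA T V (case_nat X \<rho>') g" for X
    by (rule AMu.IH[where d="Suc d"]) (use AMu.prems(1) h in auto)
  then show ?case by simp
next
  case (ANu g)
  have h: "\<forall>j<Suc d. case_nat X \<rho> j = case_nat X \<rho>' j" for X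
    using ANu.prems(2) by (auto split: nat.split)
  have "semA T V (case_nat X \<rho>) g = semA T V (case_nat X \<rho>') g" for X
    by (rule ANu.IH[where d="Suc d"]) (use ANu.prems(1) h in auto)
  then show ?case by simp
next
  case (AMuA e g)
  have h: "\<forall>j<Suc d. case_nat X \<rho> j = case_nat X \<rho>' j" for X
    using AMuA.prems(2) by (auto split: nat.split)
  have "semA T V (case_nat X \<rho>) g = semA T V (case_nat X \<rho>') g" for X
    by (rule AMuA.IH[where d="Suc d"]) (use AMuA.prems(1) h in auto)
  then show ?case by simp
next
  case (ANuA e g)
  have h: "\<forall>j<Suc d. case_nat X \<rho> j = case_nat X \<rho>' j" for X
    using ANuA.prems(2) by (auto split: nat.split)
  have "semA T V (case_nat X \<rho>) g = semA T V (case_nat X \<rho>') g" for X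
    by (rule ANuA.IH[where d="Suc d"]) (use ANuA.prems(1) h in auto)
  then show ?case by simp
next
  case (ABox g)
  have "semA T V \<rho> g = semA T V \<rho>' g"
    by (rule ABox.IH[where d=d]) (use ABox.prems in auto)
  then show ?case by simp
next
  case (ADia g)
  have "semA T V \<rho> g = semA T V \<rho>' g"
    by (rule ADia.IH[where d=d]) (use ADia.prems in auto)
  then show ?case by simp
qed auto

lemma case_nat_upd: "(case_nat X \<rho>)(Suc k := S) = case_nat X (\<rho>(k := S))"
  by (rule ext) (simp split: nat.split)

lemma semA_closed: "lc 0 (erase P) \<Longrightarrow> semA T V \<rho> P = semA T V \<rho>' P"
  by (rule semA_lc) auto

lemma semA_subst: "lc 0 (erase P) \<Longrightarrow> semA T V \<rho> (asubst k P c) = semA T V (\<rho>(k := semA T V \<rho> P)) c"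
proof (induction c arbitrary: k \<rho>)
  case (AB j)
  then show ?case using semA_sub[of T V \<rho> P] by auto
next
  case (ABox g)
  then show ?case by simp
next
  case (ADia g)
  then show ?case by simp
next
  case (AConj G)
  then show ?case by auto
next
  case (ADisj G)
  then show ?case by auto
next
  case (AMu g)
  have e: "semA T V (case_nat X \<rho>) (asubst (Suc k) P g) = semA T V (case_nat X (\<rho>(k := semA T V \<rho> P))) g" for X
    using AMu.IH[OF AMu.prems, where k="Suc k" and \<rho>="case_nat X \<rho>"] semA_closed[OF AMu.prems, of T V "case_nat X \<rho>" \<rho>]
    by (simp add: case_nat_upd)
  have eq: "(\<lambda>X. semA T V (case_nat X \<rho>) (asubst (Suc k) P g)) = (\<lambda>X. semA T V (case_nat X (\<rho>(k := semA T V \<rho> P))) g)"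
    by (rule ext) (rule e)
  show ?case unfolding asubst.simps semA.simps eq by (rule refl)
next
  case (ANu g)
  have e: "semA T V (case_nat X \<rho>) (asubst (Suc k) P g) = semA T V (case_nat X (\<rho>(k := semA T V \<rho> P))) g" for X
    using ANu.IH[OF ANu.prems, where k="Suc k" and \<rho>="case_nat X \<rho>"] semA_closed[OF ANu.prems, of T V "case_nat X \<rho>" \<rho>]
    by (simp add: case_nat_upd)
  have eq: "(\<lambda>X. semA T V (case_nat X \<rho>) (asubst (Suc k) P g)) = (\<lambda>X. semA T V (case_nat X (\<rho>(k := semA T V \<rho> P))) g)"
    by (rule ext) (rule e)
  show ?case unfolding asubst.simps semA.simps eq by (rule refl)
next
  case (AMuA e g)
  have e: "semA T V (case_nat X \<rho>) (asubst (Suc k) P g) = semA T V (case_nat X (\<rho>(k := semA T V \<rho> P))) g" for X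
    using AMuA.IH[OF AMuA.prems, where k="Suc k" and \<rho>="case_nat X \<rho>"] semA_closed[OF AMuA.prems, of T V "case_nat X \<rho>" \<rho>]
    by (simp add: case_nat_upd)
  have eq: "(\<lambda>X. semA T V (case_nat X \<rho>) (asubst (Suc k) P g)) = (\<lambda>X. semA T V (case_nat X (\<rho>(k := semA T V \<rho> P))) g)"
    by (rule ext) (rule e)
  show ?case unfolding asubst.simps semA.simps eq by (rule refl)
next
  case (ANuA e g)
  have e: "semA T V (case_nat X \<rho>) (asubst (Suc k) P g) = semA T V (case_nat X (\<rho>(k := semA T V \<rho> P))) g" for X
    using ANuA.IH[OF ANuA.prems, where k="Suc k" and \<rho>="case_nat X \<rho>"] semA_closed[OF ANuA.prems, of T V "case_nat X \<rho>" \<rho>]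
    by (simp add: case_nat_upd)
  have eq: "(\<lambda>X. semA T V (case_nat X \<rho>) (asubst (Suc k) P g)) = (\<lambda>X. semA T V (case_nat X (\<rho>(k := semA T V \<rho> P))) g)"
    by (rule ext) (rule e)
  show ?case unfolding asubst.simps semA.simps eq by (rule refl)
qed auto

lemma semA_unf: "lc 0 (erase P) \<Longrightarrow> lc 1 (erase c) \<Longrightarrow>
   semA T V \<rho> (asubst 0 P c) = semA T V (case_nat (semA T V \<rho> P) \<rho>) c"
  unfolding semA_subst by (rule semA_lc[where d=1]) auto

lemma semA_emb: "semA T V \<rho> (emb f) = sem T V \<rho> f"
proof (induction f arbitrary: \<rho>)
  case (Conj G)
  then show ?case by auto
next
  case (Disj G)
  then show ?case by auto
qed auto



fun plain :: "bool \<Rightarrow> ('v,'i) af \<Rightarrow> ('v,'i) af" where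
  "plain True c = AMu c" | "plain False c = ANu c"

fun annot :: "bool \<Rightarrow> 'i ap \<Rightarrow> ('v,'i) af \<Rightarrow> ('v,'i) af" where
  "annot True d c = AMuA d c" | "annot False d c = ANuA d c"

fun fx :: "bool \<Rightarrow> 'v fm \<Rightarrow> 'v fm" where
  "fx True a = Mu a" | "fx False a = Nu a"

inductive astep :: "bool \<Rightarrow> ('v,'i) af \<Rightarrow> ('v,'i) af \<Rightarrow> bool" for l where
  conj: "g \<in> set G \<Longrightarrow> astep l (AConj G) g"
| disj: "g \<in> set G \<Longrightarrow> astep l (ADisj G) g"
| box: "astep l (ABox a) a"
| dia: "astep l (ADia a) a"
| mu1: "astep l (plain l c) (asubst 0 (annot l d c) c)"
| mu2: "astep l (plain (\<not> l) c) (asubst 0 (plain (\<not> l) c) c)"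
| mu3: "(d', d) \<in> apR\<^sup>+ \<Longrightarrow> astep l (annot l d c) (asubst 0 (annot l d' c) c)"

lemma erase_plain[simp]: "erase (plain l c) = fx l (erase c)"
  by (cases l) auto
lemma erase_annot[simp]: "erase (annot l d c) = fx l (erase c)"
  by (cases l) auto
lemma asub_plain[simp]: "asub (plain l c) = insert (plain l c) (asub c)"
  by (cases l) auto
lemma asub_annot[simp]: "asub (annot l d c) = insert (annot l d c) (asub c)"
  by (cases l) auto
lemma plain_ne_annot[simp]: "plain l c \<noteq> annot l' d c'"
  by (cases l; cases l') auto
lemma annot_inj[simp]: "annot l d c = annot l e c' \<longleftrightarrow> d = e \<and> c = c'"
  by (cases l) auto
lemma fx_inj[simp]: "fx l a = fx l' b \<longleftrightarrow> l = l' \<and> a = b"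
  by (cases l; cases l') auto
lemma size_fx[simp]: "size (fx l a) = Suc (size a)"
  by (cases l) auto
lemma fx_ne[simp]: "fx l a \<noteq> Conj G" "fx l a \<noteq> Disj G" "fx l a \<noteq> Box b" "fx l a \<noteq> Dia b"
  "Conj G \<noteq> fx l a" "Disj G \<noteq> fx l a" "Box b \<noteq> fx l a" "Dia b \<noteq> fx l a"
  by (cases l; simp)+

lemma fold_max_ge1: "(a::nat) \<le> fold max xs a"
  by (induction xs arbitrary: a) (auto, meson le_trans max.cobounded2)

lemma fold_max_ge: "x \<in> set xs \<Longrightarrow> (x::nat) \<le> fold max xs a"
proof (induction xs arbitrary: a)
  case (Cons y ys)
  show ?case
  proof (cases "x = y")
    case True
    have "x \<le> max y a" using True by simp
    also have "\<dots> \<le> fold max ys (max y a)" by (rule fold_max_ge1)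
    finally show ?thesis by simp
  next
    case False
    then have "x \<in> set ys" using Cons.prems by simp
    then show ?thesis using Cons.IH by simp
  qed
qed simp

lemma rk_sub: "f \<in> sub g \<Longrightarrow> rk f \<le> rk g"
proof (induction g arbitrary: f)
  case (Conj G)
  show ?case
  proof (cases "f = Conj G")
    case True then show ?thesis by simp
  next
    case False
    then obtain g where g: "g \<in> set G" "f \<in> sub g" using Conj.prems by auto
    have "rk f \<le> rk g" using Conj.IH[OF g] .
    also have "rk g \<le> fold max (map rk G) 0" using g(1) by (intro fold_max_ge) simp
    finally show ?thesis by simp
  qed
next
  case (Disj G)
  show ?case
  proof (cases "f = Disj G")
    case True then show ?thesis by simp
  next
    case False
    then obtain g where g: "g \<in> set G" "f \<in> sub g" using Disj.prems by auto
    have "rk f \<le> rk g" using Disj.IH[OF g] .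
    also have "rk g \<le> fold max (map rk G) 0" using g(1) by (intro fold_max_ge) simp
    finally show ?thesis by simp
  qed
qed (auto intro: le_SucI)

definition Inv :: "bool \<Rightarrow> 'v fm \<Rightarrow> 'i ap \<Rightarrow> ('v,'i) af \<Rightarrow> bool" where
  "Inv l M \<delta> x \<longleftrightarrow> (\<forall>h\<in>asub x. erase h = M \<longrightarrow> (\<exists>e c. h = annot l e c \<and> (e, \<delta>) \<in> apR\<^sup>*))"

lemma InvU:
  assumes "M = fx l (erase c)"
  shows "Inv l M e (asubst 0 (annot l e c) c)"
  unfolding Inv_def
proof (intro ballI impI)
  fix h assume h: "h \<in> asub (asubst 0 (annot l e c) c)" and eh: "erase h = M"
  have sc: "size (erase h) < size M" if "h \<in> asub c"
    using size_erase_asub[OF that] assms by auto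
  from asub_asubst[OF h] show "\<exists>e' c'. h = annot l e' c' \<and> (e', e) \<in> apR\<^sup>*"
  proof (elim disjE conjE)
    assume "h \<in> asub (annot l e c)"
    then have "h = annot l e c \<or> h \<in> asub c" by simp
    then show ?thesis using sc eh by auto
  next
    assume "h \<in> asub c" then show ?thesis using sc eh by auto
  next
    assume "annot l e c \<in> asub h" "annot l e c \<noteq> h"
    then have "size (erase (annot l e c)) < size (erase h)" using size_erase_asub by blast
    then show ?thesis using eh assms by simp
  qed
qed

lemma stepA:
  assumes "astep l x y" "erase x = fx l a"
  shows "\<exists>e' c. y = asubst 0 (annot l e' c) c \<and> Inv l (fx l a) e' y \<and>
            (\<forall>\<delta>. Inv l (fx l a) \<delta> x \<longrightarrow> (e', \<delta>) \<in> apR\<^sup>+)"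
  using assms
proof cases
  case (mu1 c d)
  have "Inv l (fx l a) d y" using InvU[of "fx l a" l c d] mu1 assms(2) by simp
  moreover have "\<not> Inv l (fx l a) \<delta> x" for \<delta>
    using mu1 assms(2) unfolding Inv_def by auto
  ultimately show ?thesis using mu1 by blast
next
  case (mu2 c)
  then show ?thesis using assms(2) by (cases l) auto
next
  case (mu3 d' d c)
  have "Inv l (fx l a) d' y" using InvU[of "fx l a" l c d'] mu3 assms(2) by simp
  moreover have "(d', \<delta>) \<in> apR\<^sup>+" if "Inv l (fx l a) \<delta> x" for \<delta>
  proof -
    from that have "\<exists>e c'. x = annot l e c' \<and> (e, \<delta>) \<in> apR\<^sup>*"
      using assms(2) self_asub unfolding Inv_def by blast
    then have "(d, \<delta>) \<in> apR\<^sup>*" using mu3(1) by auto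
    with mu3(3) show ?thesis by (rule trancl_rtrancl_trancl)
  qed
  ultimately show ?thesis using mu3 by blast
qed (use assms(2) in auto)

lemma helperB:
  assumes "Inv l M \<delta> x" "erase x \<noteq> M" "erase x \<notin> sub M - {M}"
    "erase P = erase x" "asub P \<subseteq> insert P (asub c)" "asub c \<subseteq> asub x"
  shows "Inv l M \<delta> (asubst 0 P c)"
  unfolding Inv_def
proof (intro ballI impI)
  fix h assume h: "h \<in> asub (asubst 0 P c)" and eh: "erase h = M"
  have old: "\<exists>e c. h = annot l e c \<and> (e, \<delta>) \<in> apR\<^sup>*" if "h \<in> asub c"
    using assms(1) assms(6) that eh unfolding Inv_def by blast
  from asub_asubst[OF h] show "\<exists>e c. h = annot l e c \<and> (e, \<delta>) \<in> apR\<^sup>*"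
  proof (elim disjE conjE)
    assume "h \<in> asub P"
    then have "h = P \<or> h \<in> asub c" using assms(5) by blast
    then show ?thesis
    proof
      assume "h = P" then show ?thesis using eh assms(2,4) by simp
    next
      assume "h \<in> asub c" then show ?thesis by (rule old)
    qed
  next
    assume "h \<in> asub c" then show ?thesis by (rule old)
  next
    assume Ph: "P \<in> asub h" "P \<noteq> h"
    from Ph(1) have "erase P \<in> sub (erase h)" by (rule erase_asub)
    then show ?thesis using assms(2,3,4) eh by simp
  qed
qed

lemma stepB:
  assumes "astep l x y" "erase x \<noteq> M" "erase x \<notin> sub M - {M}" "Inv l M \<delta> x"
  shows "Inv l M \<delta> y"
  using assms(1)
proof cases
  case (conj G)
  then have "asub y \<subseteq> asub x" by auto
  then show ?thesis using assms(4) unfolding Inv_def by blast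
next
  case (disj G)
  then have "asub y \<subseteq> asub x" by auto
  then show ?thesis using assms(4) unfolding Inv_def by blast
next
  case (box)
  then have "asub y \<subseteq> asub x" by auto
  then show ?thesis using assms(4) unfolding Inv_def by blast
next
  case (dia)
  then have "asub y \<subseteq> asub x" by auto
  then show ?thesis using assms(4) unfolding Inv_def by blast
next
  case (mu1 c d)
  then show ?thesis using helperB[OF assms(4,2,3), of "annot l d c" c] by auto
next
  case (mu2 c)
  then show ?thesis using helperB[OF assms(4,2,3), of "plain (\<not> l) c" c] by auto
next
  case (mu3 d' d c)
  then show ?thesis using helperB[OF assms(4,2,3), of "annot l d' c" c] by auto
qed



lemma descent:
  fixes g :: "nat \<Rightarrow> ('v,'i) af" and Pr :: "nat \<Rightarrow> bool"
  assumes step: "\<And>n. Pr n \<Longrightarrow> astep l (g n) (g (Suc n))"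
      and still: "\<And>n. \<not> Pr n \<Longrightarrow> g (Suc n) = g n"
      and infM: "\<exists>\<^sub>\<infinity>n. Pr n \<and> erase (g n) = fx l a"
      and minM: "\<And>f. f \<noteq> fx l a \<Longrightarrow> (\<exists>\<^sub>\<infinity>n. Pr n \<and> erase (g n) = f) \<Longrightarrow> rk (fx l a) < rk f"
  shows False
proof -
  define M where "M = fx l a"
  define D where "D = sub M - {M}"
  have finD: "finite D" unfolding D_def using finite_sub by simp
  have notinf: "\<not> (\<exists>\<^sub>\<infinity>n. Pr n \<and> erase (g n) = f)" if "f \<in> D" for f
  proof
    assume "\<exists>\<^sub>\<infinity>n. Pr n \<and> erase (g n) = f"
    moreover have "f \<noteq> fx l a" using that unfolding D_def M_def by simp
    ultimately have "rk M < rk f" using minM unfolding M_def by blast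
    moreover have "rk f \<le> rk M" using rk_sub that unfolding D_def by blast
    ultimately show False by simp
  qed
  have "\<not> (\<exists>\<^sub>\<infinity>n. \<exists>f\<in>D. Pr n \<and> erase (g n) = f)"
    using INFM_finite_Bex_distrib[OF finD, of "\<lambda>f n. Pr n \<and> erase (g n) = f"] notinf by blast
  then have "\<forall>\<^sub>\<infinity>n. \<not> (\<exists>f\<in>D. Pr n \<and> erase (g n) = f)" by simp
  then obtain N0 where N0: "\<And>n. n \<ge> N0 \<Longrightarrow> \<not> (\<exists>f\<in>D. Pr n \<and> erase (g n) = f)"
    unfolding MOST_nat_le by blast
  have nxt: "\<forall>m. \<exists>n\<ge>m. Pr n \<and> erase (g n) = M" using infM unfolding INFM_nat_le M_def .
  have main: "\<forall>n. n \<ge> N0 \<longrightarrow> Inv l M \<delta> (g n) \<longrightarrow> False" for \<delta>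
  proof (induction \<delta> rule: wf_induct[OF wf_apR_trancl])
    case (1 \<delta>)
    show ?case
    proof (intro allI impI)
      fix n assume n: "n \<ge> N0" and inv: "Inv l M \<delta> (g n)"
      define m where "m = (LEAST m. m \<ge> n \<and> Pr m \<and> erase (g m) = M)"
      have mex: "\<exists>m. m \<ge> n \<and> Pr m \<and> erase (g m) = M" using nxt by blast
      have m: "m \<ge> n" "Pr m" "erase (g m) = M" using LeastI_ex[OF mex] unfolding m_def by auto
      have less: "\<not> (Pr j \<and> erase (g j) = M)" if "n \<le> j" "j < m" for j
        using not_less_Least[of j "\<lambda>m. m \<ge> n \<and> Pr m \<and> erase (g m) = M"] that unfolding m_def by auto
      have invj: "Inv l M \<delta> (g (n + i))" if "n + i \<le> m" for i
        using that
      proof (induction i)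
        case 0 then show ?case using inv by simp
      next
        case (Suc i)
        have IH: "Inv l M \<delta> (g (n + i))" using Suc by simp
        have j: "\<not> (Pr (n+i) \<and> erase (g (n+i)) = M)" using less[of "n+i"] Suc.prems by simp
        show ?case
        proof (cases "Pr (n+i)")
          case True
          then have ne: "erase (g (n+i)) \<noteq> M" using j by simp
          have "n + i \<ge> N0" using n by simp
          then have "erase (g (n+i)) \<notin> D" using N0 True by blast
          then have nd: "erase (g (n+i)) \<notin> sub M - {M}" unfolding D_def .
          from stepB[OF step[OF True] ne nd IH] show ?thesis by simp
        next
          case False
          then show ?thesis using still IH by simp
        qed
      qed
      have invm: "Inv l M \<delta> (g m)" using invj[of "m - n"] m(1) by simp
      have em: "erase (g m) = fx l a" using m(3) unfolding M_def .
      from stepA[OF step[OF m(2)] em] obtain e' where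
        e': "Inv l M e' (g (Suc m))" "\<forall>\<delta>. Inv l M \<delta> (g m) \<longrightarrow> (e', \<delta>) \<in> apR\<^sup>+"
        unfolding M_def by blast
      have lt: "(e', \<delta>) \<in> apR\<^sup>+" using e'(2) invm by blast
      have "Suc m \<ge> N0" using m(1) n by simp
      then show False using 1 lt e'(1) by blast
    qed
  qed
  obtain m where m: "m \<ge> N0" "Pr m" "erase (g m) = M" using nxt by blast
  have em: "erase (g m) = fx l a" using m(3) unfolding M_def .
  from stepA[OF step[OF m(2)] em] obtain e' where "Inv l M e' (g (Suc m))"
    unfolding M_def by blast
  then show False using main[of e'] m(1) by simp
qed



fun okA :: "bool \<Rightarrow> ('v,'i) af \<Rightarrow> bool" where
  "okA l (AMuA d c) = (l \<and> okA l c)"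
| "okA l (ANuA d c) = (\<not> l \<and> okA l c)"
| "okA l (ABox c) = okA l c"
| "okA l (ADia c) = okA l c"
| "okA l (AConj G) = (\<forall>g\<in>set G. okA l g)"
| "okA l (ADisj G) = (\<forall>g\<in>set G. okA l g)"
| "okA l (AMu c) = okA l c"
| "okA l (ANu c) = okA l c"
| "okA l _ = True"

lemma okA_asubst: "okA l P \<Longrightarrow> okA l c \<Longrightarrow> okA l (asubst k P c)"
  by (induction c arbitrary: k) auto

lemma okA_emb: "okA l (emb f)"
  by (induction f) auto

lemma lc_mono: "lc d b \<Longrightarrow> d \<le> e \<Longrightarrow> lc e b"
  by (induction b arbitrary: d e) auto

lemma lc_subst: "lc (Suc d) c \<Longrightarrow> lc d b \<Longrightarrow> lc d (subst d b c)"
proof (induction c arbitrary: d b)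
  case (Mu c)
  then show ?case using lc_mono[of d b "Suc d"] by simp
next
  case (Nu c)
  then show ?case using lc_mono[of d b "Suc d"] by simp
qed auto

lemma lc_unfold: "lc 0 f \<Longrightarrow> lc 0 (unfold f)"
  by (cases f) (auto intro: lc_subst)

lemma erase_eq_Conj: "erase g = Conj G \<longleftrightarrow> (\<exists>G'. g = AConj G' \<and> map erase G' = G)"
  by (cases g) auto
lemma erase_eq_Disj: "erase g = Disj G \<longleftrightarrow> (\<exists>G'. g = ADisj G' \<and> map erase G' = G)"
  by (cases g) auto
lemma erase_eq_Box: "erase g = Box a \<longleftrightarrow> (\<exists>c. g = ABox c \<and> erase c = a)"
  by (cases g) auto
lemma erase_eq_Dia: "erase g = Dia a \<longleftrightarrow> (\<exists>c. g = ADia c \<and> erase c = a)"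
  by (cases g) auto
lemma erase_eq_Var: "erase g = Var x \<longleftrightarrow> g = AV x"
  by (cases g) auto
lemma erase_eq_NVar: "erase g = NVar x \<longleftrightarrow> g = AN x"
  by (cases g) auto
lemma erase_eq_Mu: "erase g = Mu a \<longleftrightarrow> (\<exists>c. (g = AMu c \<or> (\<exists>d. g = AMuA d c)) \<and> erase c = a)"
  by (cases g) auto
lemma erase_eq_Nu: "erase g = Nu a \<longleftrightarrow> (\<exists>c. (g = ANu c \<or> (\<exists>d. g = ANuA d c)) \<and> erase c = a)"
  by (cases g) auto

lemma map_erase_Box: "map erase xs = map Box ys \<Longrightarrow> \<exists>zs. xs = map ABox zs \<and> map erase zs = ys"
proof (induction xs arbitrary: ys)
  case Nil then show ?case by simp
next
  case (Cons x xs)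
  then obtain y ys' where y: "ys = y # ys'" "erase x = Box y" "map erase xs = map Box ys'" by auto
  then obtain c where "x = ABox c" "erase c = y" using erase_eq_Box by blast
  moreover obtain zs where "xs = map ABox zs" "map erase zs = ys'" using Cons.IH y(3) by blast
  ultimately show ?case using y(1) by (intro exI[of _ "c # zs"]) simp
qed

lemma map_erase_Dia: "map erase xs = map Dia ys \<Longrightarrow> \<exists>zs. xs = map ADia zs \<and> map erase zs = ys"
proof (induction xs arbitrary: ys)
  case Nil then show ?case by simp
next
  case (Cons x xs)
  then obtain y ys' where y: "ys = y # ys'" "erase x = Dia y" "map erase xs = map Dia ys'" by auto
  then obtain c where "x = ADia c" "erase c = y" using erase_eq_Dia by blast
  moreover obtain zs where "xs = map ADia zs" "map erase zs = ys'" using Cons.IH y(3) by blast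
  ultimately show ?case using y(1) by (intro exI[of _ "c # zs"]) simp
qed

abbreviation sA where "sA T V g \<equiv> semA T V (\<lambda>_. {}) g"

lemma key_unf:
  assumes "lc 1 (erase c)" "lc 0 (erase P)"
  shows "sA T V (asubst 0 P c) = semA T V (case_nat (sA T V P) (\<lambda>_. {})) c"
  by (rule semA_unf[OF assms(2,1)])

lemma unf_left:
  assumes "w \<in> sA T V g" "lc 0 (erase g)" "okA True g" "is_fix (erase g)"
  shows "\<exists>g'. erase g' = unfold (erase g) \<and> w \<in> sA T V g' \<and> okA True g' \<and> astep True g g'"
proof -
  from assms(4) obtain a where "erase g = Mu a \<or> erase g = Nu a" unfolding is_fix_def by blast
  then show ?thesis
  proof
    assume "erase g = Mu a"
    then obtain c where c: "g = AMu c \<or> (\<exists>d. g = AMuA d c)" "erase c = a" using erase_eq_Mu by blast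
    let ?F = "\<lambda>X. semA T V (case_nat X (\<lambda>_. {})) c"
    have lc1: "lc 1 (erase c)" using assms(2) c by auto
    have okc: "okA True c" using assms(3) c by auto
    have key: "sA T V (asubst 0 (AMuA d c) c) = ?F (app ?F d)" for d
    proof -
      have "lc 0 (erase (AMuA d c))" using lc1 by simp
      from key_unf[OF lc1 this, of T V] show ?thesis by simp
    qed
    have e1: "erase (asubst 0 (AMuA d c) c) = unfold (erase g)" for d
      using c by (auto simp: erase_asubst)
    have e3: "okA True (asubst 0 (AMuA d c) c)" for d
      by (rule okA_asubst) (use okc in simp_all)
    from c(1) show ?thesis
    proof (elim disjE exE)
      assume g: "g = AMu c"
      then have "w \<in> lfp ?F" using assms(1) by simp
      from lfp_app[OF semA_mono_F this] obtain d where d: "w \<in> ?F (app ?F d)" by blast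
      have st: "astep True g (asubst 0 (AMuA d c) c)" using astep.mu1[of True c d] g by simp
      have "w \<in> sA T V (asubst 0 (AMuA d c) c)" using d key[of d] by simp
      then have "erase (asubst 0 (AMuA d c) c) = unfold (erase g) \<and> w \<in> sA T V (asubst 0 (AMuA d c) c) \<and> okA True (asubst 0 (AMuA d c) c) \<and> astep True g (asubst 0 (AMuA d c) c)"
        using e1[of d] e3[of d] st by simp
      then show ?thesis by (rule exI)
    next
      fix d assume g: "g = AMuA d c"
      then have "w \<in> app ?F d" using assms(1) by simp
      from app_desc[OF this] obtain d' where d': "(d', d) \<in> apR\<^sup>+" "w \<in> ?F (app ?F d')" by blast
      have st: "astep True g (asubst 0 (AMuA d' c) c)" using astep.mu3[OF d'(1), of True c] g by simp
      have "w \<in> sA T V (asubst 0 (AMuA d' c) c)" using d'(2) key[of d'] by simp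
      then have "erase (asubst 0 (AMuA d' c) c) = unfold (erase g) \<and> w \<in> sA T V (asubst 0 (AMuA d' c) c) \<and> okA True (asubst 0 (AMuA d' c) c) \<and> astep True g (asubst 0 (AMuA d' c) c)"
        using e1[of d'] e3[of d'] st by simp
      then show ?thesis by (rule exI)
    qed
  next
    assume "erase g = Nu a"
    then obtain c where c: "g = ANu c \<or> (\<exists>d. g = ANuA d c)" "erase c = a" using erase_eq_Nu by blast
    then have g: "g = ANu c" using assms(3) by auto
    let ?F = "\<lambda>X. semA T V (case_nat X (\<lambda>_. {})) c"
    have lc1: "lc 1 (erase c)" using assms(2) c by auto
    have okc: "okA True c" using assms(3) g by auto
    have key: "sA T V (asubst 0 (ANu c) c) = ?F (gfp ?F)"
    proof -
      have "lc 0 (erase (ANu c))" using lc1 by simp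
      from key_unf[OF lc1 this, of T V] show ?thesis by simp
    qed
    have e1: "erase (asubst 0 (ANu c) c) = unfold (erase g)"
      using g by (auto simp: erase_asubst)
    have e3: "okA True (asubst 0 (ANu c) c)"
      by (rule okA_asubst) (use okc in simp_all)
    have "w \<in> gfp ?F" using assms(1) g by simp
    then have "w \<in> ?F (gfp ?F)" using gfp_unfold[OF semA_mono_F] by blast
    then have "w \<in> sA T V (asubst 0 (ANu c) c)" using key by simp
    moreover have "astep True g (asubst 0 (ANu c) c)" using astep.mu2[of True c] g by simp
    ultimately have "erase (asubst 0 (ANu c) c) = unfold (erase g) \<and> w \<in> sA T V (asubst 0 (ANu c) c) \<and> okA True (asubst 0 (ANu c) c) \<and> astep True g (asubst 0 (ANu c) c)"
      using e1 e3 by simp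
    then show ?thesis by (rule exI)
  qed
qed

lemma unf_right:
  assumes "w \<in> T" "w \<notin> sA T V g" "lc 0 (erase g)" "okA False g" "is_fix (erase g)"
  shows "\<exists>g'. erase g' = unfold (erase g) \<and> w \<notin> sA T V g' \<and> okA False g' \<and> astep False g g'"
proof -
  from assms(5) obtain a where "erase g = Mu a \<or> erase g = Nu a" unfolding is_fix_def by blast
  then show ?thesis
  proof
    assume "erase g = Nu a"
    then obtain c where c: "g = ANu c \<or> (\<exists>d. g = ANuA d c)" "erase c = a" using erase_eq_Nu by blast
    let ?F = "\<lambda>X. semA T V (case_nat X (\<lambda>_. {})) c"
    have lc1: "lc 1 (erase c)" using assms(3) c by auto
    have okc: "okA False c" using assms(4) c by auto
    have key: "sA T V (asubst 0 (ANuA d c) c) = ?F (capp T ?F d)" for d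
    proof -
      have "lc 0 (erase (ANuA d c))" using lc1 by simp
      from key_unf[OF lc1 this, of T V] show ?thesis by simp
    qed
    have e1: "erase (asubst 0 (ANuA d c) c) = unfold (erase g)" for d
      using c by (auto simp: erase_asubst)
    have e3: "okA False (asubst 0 (ANuA d c) c)" for d
      by (rule okA_asubst) (use okc in simp_all)
    from c(1) show ?thesis
    proof (elim disjE exE)
      assume g: "g = ANu c"
      then have "w \<notin> gfp ?F" using assms(2) by simp
      from gfp_capp[OF semA_mono_F this] obtain d where d: "w \<notin> ?F (capp T ?F d)" by blast
      have st: "astep False g (asubst 0 (ANuA d c) c)" using astep.mu1[of False c d] g by simp
      have "w \<notin> sA T V (asubst 0 (ANuA d c) c)" using d key[of d] by simp
      then have "erase (asubst 0 (ANuA d c) c) = unfold (erase g) \<and> w \<notin> sA T V (asubst 0 (ANuA d c) c) \<and> okA False (asubst 0 (ANuA d c) c) \<and> astep False g (asubst 0 (ANuA d c) c)"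
        using e1[of d] e3[of d] st by simp
      then show ?thesis by (rule exI)
    next
      fix d assume g: "g = ANuA d c"
      then have "w \<notin> capp T ?F d" using assms(2) by simp
      from capp_desc[OF assms(1) this] obtain d' where d': "(d', d) \<in> apR\<^sup>+" "w \<notin> ?F (capp T ?F d')" by blast
      have st: "astep False g (asubst 0 (ANuA d' c) c)" using astep.mu3[OF d'(1), of False c] g by simp
      have "w \<notin> sA T V (asubst 0 (ANuA d' c) c)" using d'(2) key[of d'] by simp
      then have "erase (asubst 0 (ANuA d' c) c) = unfold (erase g) \<and> w \<notin> sA T V (asubst 0 (ANuA d' c) c) \<and> okA False (asubst 0 (ANuA d' c) c) \<and> astep False g (asubst 0 (ANuA d' c) c)"
        using e1[of d'] e3[of d'] st by simp
      then show ?thesis by (rule exI)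
    qed
  next
    assume "erase g = Mu a"
    then obtain c where c: "g = AMu c \<or> (\<exists>d. g = AMuA d c)" "erase c = a" using erase_eq_Mu by blast
    then have g: "g = AMu c" using assms(4) by auto
    let ?F = "\<lambda>X. semA T V (case_nat X (\<lambda>_. {})) c"
    have lc1: "lc 1 (erase c)" using assms(3) c by auto
    have okc: "okA False c" using assms(4) g by auto
    have key: "sA T V (asubst 0 (AMu c) c) = ?F (lfp ?F)"
    proof -
      have "lc 0 (erase (AMu c))" using lc1 by simp
      from key_unf[OF lc1 this, of T V] show ?thesis by simp
    qed
    have e1: "erase (asubst 0 (AMu c) c) = unfold (erase g)"
      using g by (auto simp: erase_asubst)
    have e3: "okA False (asubst 0 (AMu c) c)"
      by (rule okA_asubst) (use okc in simp_all)
    have "w \<notin> lfp ?F" using assms(2) g by simp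
    then have "w \<notin> ?F (lfp ?F)" using lfp_unfold[OF semA_mono_F] by blast
    then have "w \<notin> sA T V (asubst 0 (AMu c) c)" using key by simp
    moreover have "astep False g (asubst 0 (AMu c) c)" using astep.mu2[of False c] g by simp
    ultimately have "erase (asubst 0 (AMu c) c) = unfold (erase g) \<and> w \<notin> sA T V (asubst 0 (AMu c) c) \<and> okA False (asubst 0 (AMu c) c) \<and> astep False g (asubst 0 (AMu c) c)"
      using e1 e3 by simp
    then show ?thesis by (rule exI)
  qed
qed



definition Good :: "'n list set \<Rightarrow> ('n list \<Rightarrow> 'v \<Rightarrow> bool) \<Rightarrow> 'n list \<Rightarrow> 'v seq \<Rightarrow>
    ('v,'n list set) af list \<times> ('v,'n list set) af list \<Rightarrow> bool" where
  "Good T V w S A \<longleftrightarrow> w \<in> T \<and> map erase (fst A) = fst S \<and> map erase (snd A) = snd S \<and>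
     (\<forall>g\<in>set (fst A). w \<in> sA T V g \<and> lc 0 (erase g) \<and> okA True g) \<and>
     (\<forall>g\<in>set (snd A). w \<notin> sA T V g \<and> lc 0 (erase g) \<and> okA False g)"

fun afm :: "('v,'i) af list \<times> ('v,'i) af list \<Rightarrow> occ \<Rightarrow> ('v,'i) af" where
  "afm (X, Y) (l, j) = (if l then X ! j else Y ! j)"

definition RelS :: "rule \<Rightarrow> 'v seq \<Rightarrow> 'v seq \<Rightarrow> ('v,'i) af list \<times> ('v,'i) af list \<Rightarrow>
    ('v,'i) af list \<times> ('v,'i) af list \<Rightarrow> bool" where
  "RelS r S S' A A' \<longleftrightarrow> (\<forall>oc oc'. valid_occ S oc \<longrightarrow> link r S oc oc' \<longrightarrow> valid_occ S' oc' \<longrightarrow>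
      (if principal r S oc then astep (fst oc) (afm A oc) (afm A' oc') else afm A' oc' = afm A oc))"

lemma GoodD:
  assumes "Good T V w (\<Phi>, \<Psi>) (X, Y)"
  shows "w \<in> T" "map erase X = \<Phi>" "map erase Y = \<Psi>"
    "\<And>g. g \<in> set X \<Longrightarrow> w \<in> sA T V g \<and> lc 0 (erase g) \<and> okA True g"
    "\<And>g. g \<in> set Y \<Longrightarrow> w \<notin> sA T V g \<and> lc 0 (erase g) \<and> okA False g"
  using assms unfolding Good_def by auto

lemma GoodI:
  assumes "w \<in> T" "map erase X = \<Phi>" "map erase Y = \<Psi>"
    "\<And>g. g \<in> set X \<Longrightarrow> w \<in> sA T V g \<and> lc 0 (erase g) \<and> okA True g"
    "\<And>g. g \<in> set Y \<Longrightarrow> w \<notin> sA T V g \<and> lc 0 (erase g) \<and> okA False g"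
  shows "Good T V w (\<Phi>, \<Psi>) (X, Y)"
  using assms unfolding Good_def by auto

lemma map_swap: "Suc i < length xs \<Longrightarrow> map f (swap_at i xs) = swap_at i (map f xs)"
  unfolding swap_at_def by (simp add: map_update)

lemma set_swap: "Suc i < length xs \<Longrightarrow> set (swap_at i xs) \<subseteq> set xs"
proof -
  assume len: "Suc i < length xs"
  have a: "xs ! i \<in> set xs" "xs ! Suc i \<in> set xs" using len by simp_all
  have s1: "set (xs[i := xs ! Suc i]) \<subseteq> insert (xs ! Suc i) (set xs)" by (rule set_update_subset_insert)
  have s2: "set ((xs[i := xs ! Suc i])[Suc i := xs ! i]) \<subseteq> insert (xs ! i) (set (xs[i := xs ! Suc i]))"
    by (rule set_update_subset_insert)
  show ?thesis unfolding swap_at_def using a s1 s2 by blast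
qed

lemma nth_swap: "Suc i < length xs \<Longrightarrow> j < length xs \<Longrightarrow>
   swap_at i xs ! (if j = i then Suc i else if j = Suc i then i else j) = xs ! j"
proof -
  assume len: "Suc i < length xs" and j: "j < length xs"
  show ?thesis
  proof (cases "j = i")
    case True then show ?thesis using len unfolding swap_at_def by simp
  next
    case False
    show ?thesis
    proof (cases "j = Suc i")
      case True then show ?thesis using len unfolding swap_at_def by (simp add: nth_list_update_neq)
    next
      case False
      then show ?thesis using \<open>j \<noteq> i\<close> unfolding swap_at_def by (simp add: nth_list_update_neq)
    qed
  qed
qed

lemma length_swap[simp]: "length (swap_at i xs) = length xs"
  unfolding swap_at_def by simp

lemma st_ExL:
  assumes "Good T V w (\<Phi>, \<Psi>) (X, Y)" "Suc i < length \<Phi>"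
  shows "Good T V w (swap_at i \<Phi>, \<Psi>) (swap_at i X, Y) \<and>
         RelS (ExL i) (\<Phi>, \<Psi>) (swap_at i \<Phi>, \<Psi>) (X, Y) (swap_at i X, Y)"
proof
  note G = GoodD[OF assms(1)]
  have len: "Suc i < length X" using G(2) assms(2) by auto
  have sub: "set (swap_at i X) \<subseteq> set X" by (rule set_swap[OF len])
  show "Good T V w (swap_at i \<Phi>, \<Psi>) (swap_at i X, Y)"
  proof (rule GoodI)
    show "map erase (swap_at i X) = swap_at i \<Phi>" using map_swap[OF len, of erase] G(2) by simp
    fix g assume "g \<in> set (swap_at i X)"
    then show "w \<in> sA T V g \<and> lc 0 (erase g) \<and> okA True g" using sub G(4) by blast
  qed (use G in auto)
  show "RelS (ExL i) (\<Phi>, \<Psi>) (swap_at i \<Phi>, \<Psi>) (X, Y) (swap_at i X, Y)"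
    unfolding RelS_def
  proof (intro allI impI)
    fix oc oc' :: occ
    assume v: "valid_occ (\<Phi>, \<Psi>) oc" and lk: "link (ExL i) (\<Phi>, \<Psi>) oc oc'"
    obtain l j where oc: "oc = (l, j)" by (cases oc)
    show "if principal (ExL i) (\<Phi>, \<Psi>) oc then astep (fst oc) (afm (X, Y) oc) (afm (swap_at i X, Y) oc')
          else afm (swap_at i X, Y) oc' = afm (X, Y) oc"
      using v lk oc nth_swap[OF len, of j] G(2) by (cases l) auto
  qed
qed

lemma st_ExR:
  assumes "Good T V w (\<Phi>, \<Psi>) (X, Y)" "Suc i < length \<Psi>"
  shows "Good T V w (\<Phi>, swap_at i \<Psi>) (X, swap_at i Y) \<and>
         RelS (ExR i) (\<Phi>, \<Psi>) (\<Phi>, swap_at i \<Psi>) (X, Y) (X, swap_at i Y)"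
proof
  note G = GoodD[OF assms(1)]
  have len: "Suc i < length Y" using G(3) assms(2) by auto
  have sub: "set (swap_at i Y) \<subseteq> set Y" by (rule set_swap[OF len])
  show "Good T V w (\<Phi>, swap_at i \<Psi>) (X, swap_at i Y)"
  proof (rule GoodI)
    show "map erase (swap_at i Y) = swap_at i \<Psi>" using map_swap[OF len, of erase] G(3) by simp
    fix g assume "g \<in> set (swap_at i Y)"
    then show "w \<notin> sA T V g \<and> lc 0 (erase g) \<and> okA False g" using sub G(5) by blast
  qed (use G in auto)
  show "RelS (ExR i) (\<Phi>, \<Psi>) (\<Phi>, swap_at i \<Psi>) (X, Y) (X, swap_at i Y)"
    unfolding RelS_def
  proof (intro allI impI)
    fix oc oc' :: occ
    assume v: "valid_occ (\<Phi>, \<Psi>) oc" and lk: "link (ExR i) (\<Phi>, \<Psi>) oc oc'"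
    obtain l j where oc: "oc = (l, j)" by (cases oc)
    show "if principal (ExR i) (\<Phi>, \<Psi>) oc then astep (fst oc) (afm (X, Y) oc) (afm (X, swap_at i Y) oc')
          else afm (X, swap_at i Y) oc' = afm (X, Y) oc"
      using v lk oc nth_swap[OF len, of j] G(3) by (cases l) auto
  qed
qed

lemma st_CtrL:
  assumes "Good T V w (a # \<Phi>', \<Psi>) (X, Y)"
  shows "\<exists>A'. Good T V w (a # a # \<Phi>', \<Psi>) A' \<and> RelS CtrL (a # \<Phi>', \<Psi>) (a # a # \<Phi>', \<Psi>) (X, Y) A'"
proof -
  note G = GoodD[OF assms(1)]
  obtain g X' where X: "X = g # X'" using G(2) by (cases X) auto
  have "Good T V w (a # a # \<Phi>', \<Psi>) (g # g # X', Y)"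
    by (rule GoodI) (use G X in auto)
  moreover have "RelS CtrL (a # \<Phi>', \<Psi>) (a # a # \<Phi>', \<Psi>) (X, Y) (g # g # X', Y)"
    unfolding RelS_def
  proof (intro allI impI)
    fix oc oc' :: occ
    assume v: "valid_occ (a # \<Phi>', \<Psi>) oc" and lk: "link CtrL (a # \<Phi>', \<Psi>) oc oc'"
    obtain l j where oc: "oc = (l, j)" by (cases oc)
    show "if principal CtrL (a # \<Phi>', \<Psi>) oc then astep (fst oc) (afm (X, Y) oc) (afm (g # g # X', Y) oc')
          else afm (g # g # X', Y) oc' = afm (X, Y) oc"
      using v lk oc X by (cases l; cases j) auto
  qed
  ultimately show ?thesis by blast
qed

lemma st_CtrR:
  assumes "Good T V w (\<Phi>, \<Psi>' @ [a]) (X, Y)"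
  shows "\<exists>A'. Good T V w (\<Phi>, \<Psi>' @ [a, a]) A' \<and> RelS CtrR (\<Phi>, \<Psi>' @ [a]) (\<Phi>, \<Psi>' @ [a, a]) (X, Y) A'"
proof -
  note G = GoodD[OF assms(1)]
  obtain Y' g where Y: "Y = Y' @ [g]" "map erase Y' = \<Psi>'" "erase g = a"
    using G(3) by (auto simp: map_eq_append_conv)
  have "Good T V w (\<Phi>, \<Psi>' @ [a, a]) (X, Y' @ [g, g])"
    by (rule GoodI) (use G Y in auto)
  moreover have "RelS CtrR (\<Phi>, \<Psi>' @ [a]) (\<Phi>, \<Psi>' @ [a, a]) (X, Y) (X, Y' @ [g, g])"
    unfolding RelS_def
  proof (intro allI impI)
    fix oc oc' :: occ
    assume v: "valid_occ (\<Phi>, \<Psi>' @ [a]) oc" and lk: "link CtrR (\<Phi>, \<Psi>' @ [a]) oc oc'"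
    obtain l j where oc: "oc = (l, j)" by (cases oc)
    have lY: "length Y' = length \<Psi>'" using Y(2) by auto
    show "if principal CtrR (\<Phi>, \<Psi>' @ [a]) oc then astep (fst oc) (afm (X, Y) oc) (afm (X, Y' @ [g, g]) oc')
          else afm (X, Y' @ [g, g]) oc' = afm (X, Y) oc"
      using v lk oc Y(1) lY by (cases l) (auto simp: nth_append)
  qed
  ultimately show ?thesis by blast
qed

lemma st_WkL:
  assumes "Good T V w (a # \<Phi>', \<Psi>) (X, Y)"
  shows "\<exists>A'. Good T V w (\<Phi>', \<Psi>) A' \<and> RelS WkL (a # \<Phi>', \<Psi>) (\<Phi>', \<Psi>) (X, Y) A'"
proof -
  note G = GoodD[OF assms(1)]
  obtain g X' where X: "X = g # X'" using G(2) by (cases X) auto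
  have "Good T V w (\<Phi>', \<Psi>) (X', Y)"
    by (rule GoodI) (use G X in auto)
  moreover have "RelS WkL (a # \<Phi>', \<Psi>) (\<Phi>', \<Psi>) (X, Y) (X', Y)"
    unfolding RelS_def
  proof (intro allI impI)
    fix oc oc' :: occ
    assume v: "valid_occ (a # \<Phi>', \<Psi>) oc" and lk: "link WkL (a # \<Phi>', \<Psi>) oc oc'"
    obtain l j where oc: "oc = (l, j)" by (cases oc)
    show "if principal WkL (a # \<Phi>', \<Psi>) oc then astep (fst oc) (afm (X, Y) oc) (afm (X', Y) oc')
          else afm (X', Y) oc' = afm (X, Y) oc"
      using v lk oc X by (cases l; cases j) auto
  qed
  ultimately show ?thesis by blast
qed

lemma st_WkR:
  assumes "Good T V w (\<Phi>, \<Psi>' @ [a]) (X, Y)"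
  shows "\<exists>A'. Good T V w (\<Phi>, \<Psi>') A' \<and> RelS WkR (\<Phi>, \<Psi>' @ [a]) (\<Phi>, \<Psi>') (X, Y) A'"
proof -
  note G = GoodD[OF assms(1)]
  obtain Y' g where Y: "Y = Y' @ [g]" "map erase Y' = \<Psi>'" "erase g = a"
    using G(3) by (auto simp: map_eq_append_conv)
  have "Good T V w (\<Phi>, \<Psi>') (X, Y')"
    by (rule GoodI) (use G Y in auto)
  moreover have "RelS WkR (\<Phi>, \<Psi>' @ [a]) (\<Phi>, \<Psi>') (X, Y) (X, Y')"
    unfolding RelS_def
  proof (intro allI impI)
    fix oc oc' :: occ
    assume v: "valid_occ (\<Phi>, \<Psi>' @ [a]) oc" and lk: "link WkR (\<Phi>, \<Psi>' @ [a]) oc oc'"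
    obtain l j where oc: "oc = (l, j)" by (cases oc)
    have lY: "length Y' = length \<Psi>'" using Y(2) by auto
    show "if principal WkR (\<Phi>, \<Psi>' @ [a]) oc then astep (fst oc) (afm (X, Y) oc) (afm (X, Y') oc')
          else afm (X, Y') oc' = afm (X, Y) oc"
      using v lk oc Y(1) lY by (cases l) (auto simp: nth_append)
  qed
  ultimately show ?thesis by blast
qed



lemma st_AndL:
  assumes "Good T V w (Conj G # \<Phi>', \<Psi>) (X, Y)" "k < length G"
  shows "\<exists>A'. Good T V w (G ! k # \<Phi>', \<Psi>) A' \<and> RelS (AndL k) (Conj G # \<Phi>', \<Psi>) (G ! k # \<Phi>', \<Psi>) (X, Y) A'"
proof -
  note Gd = GoodD[OF assms(1)]
  obtain g X' where X: "X = g # X'" "erase g = Conj G" "map erase X' = \<Phi>'" using Gd(2) by (cases X) auto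
  then obtain G' where g: "g = AConj G'" "map erase G' = G" using erase_eq_Conj by blast
  have kl: "k < length G'" using g(2) assms(2) by auto
  have gk: "G' ! k \<in> set G'" using kl by simp
  have tg: "w \<in> sA T V g \<and> lc 0 (erase g) \<and> okA True g" using Gd(4)[of g] X(1) by simp
  have new: "w \<in> sA T V (G' ! k) \<and> lc 0 (erase (G' ! k)) \<and> okA True (G' ! k)"
    using tg gk g by auto
  have "Good T V w (G ! k # \<Phi>', \<Psi>) (G' ! k # X', Y)"
  proof (rule GoodI)
    show "map erase (G' ! k # X') = G ! k # \<Phi>'" using g(2) X(3) kl by auto
    fix h assume "h \<in> set (G' ! k # X')"
    then show "w \<in> sA T V h \<and> lc 0 (erase h) \<and> okA True h" using new Gd(4) X by auto
  qed (use Gd in auto)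
  moreover have "RelS (AndL k) (Conj G # \<Phi>', \<Psi>) (G ! k # \<Phi>', \<Psi>) (X, Y) (G' ! k # X', Y)"
    unfolding RelS_def
  proof (intro allI impI)
    fix oc oc' :: occ
    assume v: "valid_occ (Conj G # \<Phi>', \<Psi>) oc" and lk: "link (AndL k) (Conj G # \<Phi>', \<Psi>) oc oc'"
    obtain l j where oc: "oc = (l, j)" by (cases oc)
    have st: "astep True (AConj G') (G' ! k)" using gk by (rule astep.conj)
    show "if principal (AndL k) (Conj G # \<Phi>', \<Psi>) oc then astep (fst oc) (afm (X, Y) oc) (afm (G' ! k # X', Y) oc')
          else afm (G' ! k # X', Y) oc' = afm (X, Y) oc"
      using lk oc X g st by (cases l; cases j) auto
  qed
  ultimately show ?thesis by blast
qed

lemma st_OrL: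
  assumes "Good T V w (Disj G # \<Phi>', \<Psi>) (X, Y)"
  shows "\<exists>i<length G. \<exists>A'. Good T V w (G ! i # \<Phi>', \<Psi>) A' \<and> RelS OrL (Disj G # \<Phi>', \<Psi>) (G ! i # \<Phi>', \<Psi>) (X, Y) A'"
proof -
  note Gd = GoodD[OF assms(1)]
  obtain g X' where X: "X = g # X'" "erase g = Disj G" "map erase X' = \<Phi>'" using Gd(2) by (cases X) auto
  then obtain G' where g: "g = ADisj G'" "map erase G' = G" using erase_eq_Disj by blast
  have tg: "w \<in> sA T V g \<and> lc 0 (erase g) \<and> okA True g" using Gd(4)[of g] X(1) by simp
  then obtain h where h: "h \<in> set G'" "w \<in> sA T V h" using g by auto
  then obtain i where i: "i < length G'" "G' ! i = h" by (auto simp: in_set_conv_nth)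
  have il: "i < length G" using i g(2) by auto
  have new: "w \<in> sA T V (G' ! i) \<and> lc 0 (erase (G' ! i)) \<and> okA True (G' ! i)"
    using tg h i g by auto
  have "Good T V w (G ! i # \<Phi>', \<Psi>) (G' ! i # X', Y)"
  proof (rule GoodI)
    show "map erase (G' ! i # X') = G ! i # \<Phi>'" using g(2) X(3) i by auto
    fix h assume "h \<in> set (G' ! i # X')"
    then show "w \<in> sA T V h \<and> lc 0 (erase h) \<and> okA True h" using new Gd(4) X by auto
  qed (use Gd in auto)
  moreover have "RelS OrL (Disj G # \<Phi>', \<Psi>) (G ! i # \<Phi>', \<Psi>) (X, Y) (G' ! i # X', Y)"
    unfolding RelS_def
  proof (intro allI impI)
    fix oc oc' :: occ
    assume v: "valid_occ (Disj G # \<Phi>', \<Psi>) oc" and lk: "link OrL (Disj G # \<Phi>', \<Psi>) oc oc'"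
    obtain l j where oc: "oc = (l, j)" by (cases oc)
    have st: "astep True (ADisj G') (G' ! i)" using i(1) by (intro astep.disj) simp
    show "if principal OrL (Disj G # \<Phi>', \<Psi>) oc then astep (fst oc) (afm (X, Y) oc) (afm (G' ! i # X', Y) oc')
          else afm (G' ! i # X', Y) oc' = afm (X, Y) oc"
      using lk oc X g st by (cases l; cases j) auto
  qed
  ultimately show ?thesis using il by blast
qed

lemma st_FixL:
  assumes "Good T V w (f # \<Phi>', \<Psi>) (X, Y)" "is_fix f"
  shows "\<exists>A'. Good T V w (unfold f # \<Phi>', \<Psi>) A' \<and> RelS FixL (f # \<Phi>', \<Psi>) (unfold f # \<Phi>', \<Psi>) (X, Y) A'"
proof -
  note Gd = GoodD[OF assms(1)]
  obtain g X' where X: "X = g # X'" "erase g = f" "map erase X' = \<Phi>'" using Gd(2) by (cases X) auto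
  have tg: "w \<in> sA T V g \<and> lc 0 (erase g) \<and> okA True g" using Gd(4)[of g] X(1) by simp
  then obtain g' where g': "erase g' = unfold (erase g)" "w \<in> sA T V g'" "okA True g'" "astep True g g'"
    using unf_left[of w T V g] assms(2) X(2) by blast
  have lc': "lc 0 (erase g')" using g'(1) tg lc_unfold by metis
  have "Good T V w (unfold f # \<Phi>', \<Psi>) (g' # X', Y)"
  proof (rule GoodI)
    show "map erase (g' # X') = unfold f # \<Phi>'" using g'(1) X by auto
    fix h assume "h \<in> set (g' # X')"
    then show "w \<in> sA T V h \<and> lc 0 (erase h) \<and> okA True h" using g' lc' Gd(4) X by auto
  qed (use Gd in auto)
  moreover have "RelS FixL (f # \<Phi>', \<Psi>) (unfold f # \<Phi>', \<Psi>) (X, Y) (g' # X', Y)"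
    unfolding RelS_def
  proof (intro allI impI)
    fix oc oc' :: occ
    assume v: "valid_occ (f # \<Phi>', \<Psi>) oc" and lk: "link FixL (f # \<Phi>', \<Psi>) oc oc'"
    obtain l j where oc: "oc = (l, j)" by (cases oc)
    show "if principal FixL (f # \<Phi>', \<Psi>) oc then astep (fst oc) (afm (X, Y) oc) (afm (g' # X', Y) oc')
          else afm (g' # X', Y) oc' = afm (X, Y) oc"
      using lk oc X g'(4) by (cases l; cases j) auto
  qed
  ultimately show ?thesis by blast
qed

lemma st_AndR:
  assumes "Good T V w (\<Phi>, \<Psi>' @ [Conj G]) (X, Y)"
  shows "\<exists>i<length G. \<exists>A'. Good T V w (\<Phi>, \<Psi>' @ [G ! i]) A' \<and> RelS AndR (\<Phi>, \<Psi>' @ [Conj G]) (\<Phi>, \<Psi>' @ [G ! i]) (X, Y) A'"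
proof -
  note Gd = GoodD[OF assms(1)]
  obtain Y' g where Y: "Y = Y' @ [g]" "map erase Y' = \<Psi>'" "erase g = Conj G"
    using Gd(3) by (auto simp: map_eq_append_conv)
  then obtain G' where g: "g = AConj G'" "map erase G' = G" using erase_eq_Conj by blast
  have tg: "w \<notin> sA T V g \<and> lc 0 (erase g) \<and> okA False g" using Gd(5)[of g] Y(1) by simp
  then obtain h where h: "h \<in> set G'" "w \<notin> sA T V h" using g Gd(1) by auto
  then obtain i where i: "i < length G'" "G' ! i = h" by (auto simp: in_set_conv_nth)
  have il: "i < length G" using i g(2) by auto
  have new: "w \<notin> sA T V (G' ! i) \<and> lc 0 (erase (G' ! i)) \<and> okA False (G' ! i)"
    using tg h i g by auto
  have lY: "length Y' = length \<Psi>'" using Y(2) by auto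
  have "Good T V w (\<Phi>, \<Psi>' @ [G ! i]) (X, Y' @ [G' ! i])"
  proof (rule GoodI)
    show "map erase (Y' @ [G' ! i]) = \<Psi>' @ [G ! i]" using g(2) Y(2) i by auto
    fix h assume "h \<in> set (Y' @ [G' ! i])"
    then show "w \<notin> sA T V h \<and> lc 0 (erase h) \<and> okA False h" using new Gd(5) Y by auto
  qed (use Gd in auto)
  moreover have "RelS AndR (\<Phi>, \<Psi>' @ [Conj G]) (\<Phi>, \<Psi>' @ [G ! i]) (X, Y) (X, Y' @ [G' ! i])"
    unfolding RelS_def
  proof (intro allI impI)
    fix oc oc' :: occ
    assume v: "valid_occ (\<Phi>, \<Psi>' @ [Conj G]) oc" and lk: "link AndR (\<Phi>, \<Psi>' @ [Conj G]) oc oc'"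
    obtain l j where oc: "oc = (l, j)" by (cases oc)
    have st: "astep False (AConj G') (G' ! i)" using i(1) by (intro astep.conj) simp
    show "if principal AndR (\<Phi>, \<Psi>' @ [Conj G]) oc then astep (fst oc) (afm (X, Y) oc) (afm (X, Y' @ [G' ! i]) oc')
          else afm (X, Y' @ [G' ! i]) oc' = afm (X, Y) oc"
      using v lk oc Y(1) g st lY by (cases l) (auto simp: nth_append)
  qed
  ultimately show ?thesis using il by blast
qed

lemma st_OrR:
  assumes "Good T V w (\<Phi>, \<Psi>' @ [Disj G]) (X, Y)" "k < length G"
  shows "\<exists>A'. Good T V w (\<Phi>, \<Psi>' @ [G ! k]) A' \<and> RelS (OrR k) (\<Phi>, \<Psi>' @ [Disj G]) (\<Phi>, \<Psi>' @ [G ! k]) (X, Y) A'"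
proof -
  note Gd = GoodD[OF assms(1)]
  obtain Y' g where Y: "Y = Y' @ [g]" "map erase Y' = \<Psi>'" "erase g = Disj G"
    using Gd(3) by (auto simp: map_eq_append_conv)
  then obtain G' where g: "g = ADisj G'" "map erase G' = G" using erase_eq_Disj by blast
  have kl: "k < length G'" using g(2) assms(2) by auto
  have gk: "G' ! k \<in> set G'" using kl by simp
  have tg: "w \<notin> sA T V g \<and> lc 0 (erase g) \<and> okA False g" using Gd(5)[of g] Y(1) by simp
  have new: "w \<notin> sA T V (G' ! k) \<and> lc 0 (erase (G' ! k)) \<and> okA False (G' ! k)"
    using tg gk g Gd(1) by auto
  have lY: "length Y' = length \<Psi>'" using Y(2) by auto
  have "Good T V w (\<Phi>, \<Psi>' @ [G ! k]) (X, Y' @ [G' ! k])"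
  proof (rule GoodI)
    show "map erase (Y' @ [G' ! k]) = \<Psi>' @ [G ! k]" using g(2) Y(2) kl by auto
    fix h assume "h \<in> set (Y' @ [G' ! k])"
    then show "w \<notin> sA T V h \<and> lc 0 (erase h) \<and> okA False h" using new Gd(5) Y by auto
  qed (use Gd in auto)
  moreover have "RelS (OrR k) (\<Phi>, \<Psi>' @ [Disj G]) (\<Phi>, \<Psi>' @ [G ! k]) (X, Y) (X, Y' @ [G' ! k])"
    unfolding RelS_def
  proof (intro allI impI)
    fix oc oc' :: occ
    assume v: "valid_occ (\<Phi>, \<Psi>' @ [Disj G]) oc" and lk: "link (OrR k) (\<Phi>, \<Psi>' @ [Disj G]) oc oc'"
    obtain l j where oc: "oc = (l, j)" by (cases oc)
    have st: "astep False (ADisj G') (G' ! k)" using gk by (rule astep.disj)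
    show "if principal (OrR k) (\<Phi>, \<Psi>' @ [Disj G]) oc then astep (fst oc) (afm (X, Y) oc) (afm (X, Y' @ [G' ! k]) oc')
          else afm (X, Y' @ [G' ! k]) oc' = afm (X, Y) oc"
      using v lk oc Y(1) g st lY by (cases l) (auto simp: nth_append)
  qed
  ultimately show ?thesis by blast
qed

lemma st_FixR:
  assumes "Good T V w (\<Phi>, \<Psi>' @ [f]) (X, Y)" "is_fix f"
  shows "\<exists>A'. Good T V w (\<Phi>, \<Psi>' @ [unfold f]) A' \<and> RelS FixR (\<Phi>, \<Psi>' @ [f]) (\<Phi>, \<Psi>' @ [unfold f]) (X, Y) A'"
proof -
  note Gd = GoodD[OF assms(1)]
  obtain Y' g where Y: "Y = Y' @ [g]" "map erase Y' = \<Psi>'" "erase g = f"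
    using Gd(3) by (auto simp: map_eq_append_conv)
  have tg: "w \<notin> sA T V g \<and> lc 0 (erase g) \<and> okA False g" using Gd(5)[of g] Y(1) by simp
  then obtain g' where g': "erase g' = unfold (erase g)" "w \<notin> sA T V g'" "okA False g'" "astep False g g'"
    using unf_right[of w T V g] assms(2) Y(3) Gd(1) by blast
  have lc': "lc 0 (erase g')" using g'(1) tg lc_unfold by metis
  have lY: "length Y' = length \<Psi>'" using Y(2) by auto
  have "Good T V w (\<Phi>, \<Psi>' @ [unfold f]) (X, Y' @ [g'])"
  proof (rule GoodI)
    show "map erase (Y' @ [g']) = \<Psi>' @ [unfold f]" using g'(1) Y by auto
    fix h assume "h \<in> set (Y' @ [g'])"
    then show "w \<notin> sA T V h \<and> lc 0 (erase h) \<and> okA False h" using g' lc' Gd(5) Y by auto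
  qed (use Gd in auto)
  moreover have "RelS FixR (\<Phi>, \<Psi>' @ [f]) (\<Phi>, \<Psi>' @ [unfold f]) (X, Y) (X, Y' @ [g'])"
    unfolding RelS_def
  proof (intro allI impI)
    fix oc oc' :: occ
    assume v: "valid_occ (\<Phi>, \<Psi>' @ [f]) oc" and lk: "link FixR (\<Phi>, \<Psi>' @ [f]) oc oc'"
    obtain l j where oc: "oc = (l, j)" by (cases oc)
    show "if principal FixR (\<Phi>, \<Psi>' @ [f]) oc then astep (fst oc) (afm (X, Y) oc) (afm (X, Y' @ [g']) oc')
          else afm (X, Y' @ [g']) oc' = afm (X, Y) oc"
      using v lk oc Y(1) g'(4) lY by (cases l) (auto simp: nth_append)
  qed
  ultimately show ?thesis by blast
qed

lemma st_DiaL: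
  assumes "Good T V w (Dia a # map Box \<Phi>', map Dia \<Psi>') (X, Y)"
  shows "\<exists>w' A'. Good T V w' (a # \<Phi>', \<Psi>') A' \<and> RelS DiaL (Dia a # map Box \<Phi>', map Dia \<Psi>') (a # \<Phi>', \<Psi>') (X, Y) A'"
proof -
  note Gd = GoodD[OF assms(1)]
  obtain g X' where X: "X = g # X'" "erase g = Dia a" "map erase X' = map Box \<Phi>'" using Gd(2) by (cases X) auto
  then obtain c where c: "g = ADia c" "erase c = a" using erase_eq_Dia by blast
  obtain Z where Z: "X' = map ABox Z" "map erase Z = \<Phi>'" using map_erase_Box[OF X(3)] by blast
  obtain W where W: "Y = map ADia W" "map erase W = \<Psi>'" using map_erase_Dia[OF Gd(3)] by blast
  have tg: "w \<in> sA T V g \<and> lc 0 (erase g) \<and> okA True g" using Gd(4)[of g] X(1) by simp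
  then obtain ch where ch: "w @ [ch] \<in> T" "w @ [ch] \<in> sA T V c" using c by auto
  have "Good T V (w @ [ch]) (a # \<Phi>', \<Psi>') (c # Z, W)"
  proof (rule GoodI)
    show "w @ [ch] \<in> T" by (rule ch(1))
    show "map erase (c # Z) = a # \<Phi>'" using c Z by simp
    show "map erase W = \<Psi>'" by (rule W(2))
    fix h assume h: "h \<in> set (c # Z)"
    show "w @ [ch] \<in> sA T V h \<and> lc 0 (erase h) \<and> okA True h"
    proof (cases "h = c")
      case True then show ?thesis using tg c ch by auto
    next
      case False
      then have "h \<in> set Z" using h by simp
      then have "ABox h \<in> set X" using X Z by simp
      then have "w \<in> sA T V (ABox h) \<and> lc 0 (erase (ABox h)) \<and> okA True (ABox h)" using Gd(4) by blast
      then show ?thesis using ch(1) by auto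
    qed
  next
    fix h assume h: "h \<in> set W"
    then have "ADia h \<in> set Y" using W by simp
    then have "w \<notin> sA T V (ADia h) \<and> lc 0 (erase (ADia h)) \<and> okA False (ADia h)" using Gd(5) by blast
    then show "w @ [ch] \<notin> sA T V h \<and> lc 0 (erase h) \<and> okA False h" using ch(1) Gd(1) by auto
  qed
  moreover have "RelS DiaL (Dia a # map Box \<Phi>', map Dia \<Psi>') (a # \<Phi>', \<Psi>') (X, Y) (c # Z, W)"
    unfolding RelS_def
  proof (intro allI impI)
    fix oc oc' :: occ
    assume v: "valid_occ (Dia a # map Box \<Phi>', map Dia \<Psi>') oc" and lk: "link DiaL (Dia a # map Box \<Phi>', map Dia \<Psi>') oc oc'"
    obtain l j where oc: "oc = (l, j)" by (cases oc)
    have lZ: "length Z = length \<Phi>'" using Z(2) by auto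
    have lW: "length W = length \<Psi>'" using W(2) by auto
    show "if principal DiaL (Dia a # map Box \<Phi>', map Dia \<Psi>') oc then astep (fst oc) (afm (X, Y) oc) (afm (c # Z, W) oc')
          else afm (c # Z, W) oc' = afm (X, Y) oc"
    proof (cases l)
      case True
      show ?thesis
      proof (cases j)
        case 0 then show ?thesis using True lk oc X c by (auto intro: astep.dia)
      next
        case (Suc j')
        then have "j' < length Z" using v oc True lZ by simp
        then show ?thesis using True Suc lk oc X Z by (auto intro: astep.box)
      qed
    next
      case False
      then have "j < length W" using v oc lW by simp
      then show ?thesis using False lk oc W by (auto intro: astep.dia)
    qed
  qed
  ultimately show ?thesis by blast
qed

lemma st_BoxR:
  assumes "Good T V w (map Box \<Phi>', map Dia \<Psi>' @ [Box a]) (X, Y)"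
  shows "\<exists>w' A'. Good T V w' (\<Phi>', \<Psi>' @ [a]) A' \<and> RelS BoxR (map Box \<Phi>', map Dia \<Psi>' @ [Box a]) (\<Phi>', \<Psi>' @ [a]) (X, Y) A'"
proof -
  note Gd = GoodD[OF assms(1)]
  obtain Z where Z: "X = map ABox Z" "map erase Z = \<Phi>'" using map_erase_Box[OF Gd(2)] by blast
  obtain Y0 g where Y: "Y = Y0 @ [g]" "map erase Y0 = map Dia \<Psi>'" "erase g = Box a"
    using Gd(3) by (auto simp: map_eq_append_conv)
  obtain W where W: "Y0 = map ADia W" "map erase W = \<Psi>'" using map_erase_Dia[OF Y(2)] by blast
  obtain c where c: "g = ABox c" "erase c = a" using Y(3) erase_eq_Box by blast
  have tg: "w \<notin> sA T V g \<and> lc 0 (erase g) \<and> okA False g" using Gd(5)[of g] Y(1) by simp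
  then obtain ch where ch: "w @ [ch] \<in> T" "w @ [ch] \<notin> sA T V c" using c Gd(1) by auto
  have "Good T V (w @ [ch]) (\<Phi>', \<Psi>' @ [a]) (Z, W @ [c])"
  proof (rule GoodI)
    show "w @ [ch] \<in> T" by (rule ch(1))
    show "map erase Z = \<Phi>'" by (rule Z(2))
    show "map erase (W @ [c]) = \<Psi>' @ [a]" using c W by simp
    fix h assume h: "h \<in> set Z"
    then have "ABox h \<in> set X" using Z by simp
    then have "w \<in> sA T V (ABox h) \<and> lc 0 (erase (ABox h)) \<and> okA True (ABox h)" using Gd(4) by blast
    then show "w @ [ch] \<in> sA T V h \<and> lc 0 (erase h) \<and> okA True h" using ch(1) by auto
  next
    fix h assume h: "h \<in> set (W @ [c])"
    show "w @ [ch] \<notin> sA T V h \<and> lc 0 (erase h) \<and> okA False h"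
    proof (cases "h = c")
      case True then show ?thesis using tg c ch by auto
    next
      case False
      then have "h \<in> set W" using h by simp
      then have "ADia h \<in> set Y" using Y W by simp
      then have "w \<notin> sA T V (ADia h) \<and> lc 0 (erase (ADia h)) \<and> okA False (ADia h)" using Gd(5) by blast
      then show ?thesis using ch(1) Gd(1) by auto
    qed
  qed
  moreover have "RelS BoxR (map Box \<Phi>', map Dia \<Psi>' @ [Box a]) (\<Phi>', \<Psi>' @ [a]) (X, Y) (Z, W @ [c])"
    unfolding RelS_def
  proof (intro allI impI)
    fix oc oc' :: occ
    assume v: "valid_occ (map Box \<Phi>', map Dia \<Psi>' @ [Box a]) oc" and lk: "link BoxR (map Box \<Phi>', map Dia \<Psi>' @ [Box a]) oc oc'"
    obtain l j where oc: "oc = (l, j)" by (cases oc)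
    have lZ: "length Z = length \<Phi>'" using Z(2) by auto
    have lW: "length W = length \<Psi>'" using W(2) by auto
    show "if principal BoxR (map Box \<Phi>', map Dia \<Psi>' @ [Box a]) oc then astep (fst oc) (afm (X, Y) oc) (afm (Z, W @ [c]) oc')
          else afm (Z, W @ [c]) oc' = afm (X, Y) oc"
    proof (cases l)
      case True
      then have "j < length Z" using v oc lZ by simp
      then show ?thesis using True lk oc Z by (auto intro: astep.box)
    next
      case False
      then have j: "j < Suc (length W)" using v oc lW by simp
      show ?thesis
      proof (cases "j < length W")
        case True
        then show ?thesis using False lk oc Y W by (auto simp: nth_append intro: astep.dia)
      next
        case False
        then have "j = length W" using j by simp
        then show ?thesis using \<open>\<not> l\<close> lk oc Y W c by (auto simp: nth_append intro: astep.box)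
      qed
    qed
  qed
  ultimately show ?thesis by blast
qed

lemma st_Ax:
  assumes "Good T V w S (X, Y)" "rule_inst Ax S Ss"
  shows False
proof -
  obtain \<Phi> \<Psi> where S: "S = (\<Phi>, \<Psi>)" by (cases S)
  note Gd = GoodD[OF assms(1)[unfolded S]]
  from assms(2) S obtain x where
    c: "(\<Phi>, \<Psi>) = ([Var x, NVar x], []) \<or> (\<Phi>, \<Psi>) = ([], [NVar x, Var x]) \<or> (\<Phi>, \<Psi>) = ([Var x], [Var x])"
    by auto
  then show False
  proof (elim disjE)
    assume "(\<Phi>, \<Psi>) = ([Var x, NVar x], [])"
    then have "X = [AV x, AN x]" using Gd(2) by (auto simp: map_eq_Cons_conv erase_eq_Var erase_eq_NVar)
    then show False using Gd(4)[of "AV x"] Gd(4)[of "AN x"] by auto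
  next
    assume "(\<Phi>, \<Psi>) = ([], [NVar x, Var x])"
    then have "Y = [AN x, AV x]" using Gd(3) by (auto simp: map_eq_Cons_conv erase_eq_Var erase_eq_NVar)
    then show False using Gd(5)[of "AV x"] Gd(5)[of "AN x"] Gd(1) by auto
  next
    assume "(\<Phi>, \<Psi>) = ([Var x], [Var x])"
    then have "X = [AV x]" "Y = [AV x]" using Gd(2,3) by (auto simp: map_eq_Cons_conv erase_eq_Var)
    then show False using Gd(4)[of "AV x"] Gd(5)[of "AV x"] by auto
  qed
qed



lemma single_prem:
  assumes "Ss = [S']" "\<exists>w' A'. Good T V w' S' A' \<and> RelS r S S' A A'"
  shows "\<exists>i<length Ss. \<exists>w' A'. Good T V w' (Ss ! i) A' \<and> RelS r S (Ss ! i) A A'"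
  using assms by auto

lemma step_rule:
  assumes "rule_inst r S Ss" "Good T V w S A"
  shows "\<exists>i<length Ss. \<exists>w' A'. Good T V w' (Ss ! i) A' \<and> RelS r S (Ss ! i) A A'"
proof -
  obtain \<Phi> \<Psi> where S: "S = (\<Phi>, \<Psi>)" by (cases S)
  obtain X Y where A: "A = (X, Y)" by (cases A)
  have G: "Good T V w (\<Phi>, \<Psi>) (X, Y)" using assms(2) S A by simp
  have R: "rule_inst r (\<Phi>, \<Psi>) Ss" using assms(1) S by simp
  have "\<exists>i<length Ss. \<exists>w' A'. Good T V w' (Ss ! i) A' \<and> RelS r (\<Phi>, \<Psi>) (Ss ! i) (X, Y) A'"
  proof (cases r)
    case Ax
    then show ?thesis using st_Ax[OF G] R by blast
  next
    case (ExL i)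
    then have "Suc i < length \<Phi>" "Ss = [(swap_at i \<Phi>, \<Psi>)]" using R by auto
    then show ?thesis using st_ExL[OF G] ExL by (intro single_prem) blast+
  next
    case (ExR i)
    then have "Suc i < length \<Psi>" "Ss = [(\<Phi>, swap_at i \<Psi>)]" using R by auto
    then show ?thesis using st_ExR[OF G] ExR by (intro single_prem) blast+
  next
    case CtrL
    then obtain a \<Phi>' where "\<Phi> = a # \<Phi>'" "Ss = [(a # a # \<Phi>', \<Psi>)]" using R by auto
    then show ?thesis using st_CtrL[of T V w a \<Phi>' \<Psi> X Y] G CtrL by (intro single_prem) auto
  next
    case CtrR
    then obtain a \<Psi>' where "\<Psi> = \<Psi>' @ [a]" "Ss = [(\<Phi>, \<Psi>' @ [a, a])]" using R by auto
    then show ?thesis using st_CtrR[of T V w \<Phi> \<Psi>' a X Y] G CtrR by (intro single_prem) auto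
  next
    case WkL
    then obtain a \<Phi>' where "\<Phi> = a # \<Phi>'" "Ss = [(\<Phi>', \<Psi>)]" using R by auto
    then show ?thesis using st_WkL[of T V w a \<Phi>' \<Psi> X Y] G WkL by (intro single_prem) auto
  next
    case WkR
    then obtain a \<Psi>' where "\<Psi> = \<Psi>' @ [a]" "Ss = [(\<Phi>, \<Psi>')]" using R by auto
    then show ?thesis using st_WkR[of T V w \<Phi> \<Psi>' a X Y] G WkR by (intro single_prem) auto
  next
    case (AndL k)
    then obtain G \<Phi>' where "\<Phi> = Conj G # \<Phi>'" "k < length G" "Ss = [(G ! k # \<Phi>', \<Psi>)]" using R by auto
    then show ?thesis using st_AndL[of T V w G \<Phi>' \<Psi> X Y k] G AndL by (intro single_prem) auto
  next
    case OrL
    then obtain G \<Phi>' where e: "\<Phi> = Disj G # \<Phi>'" "Ss = map (\<lambda>g. (g # \<Phi>', \<Psi>)) G" using R by auto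
    then obtain i w' A' where i: "i < length G" "Good T V w' (G ! i # \<Phi>', \<Psi>) A'"
       "RelS OrL (Disj G # \<Phi>', \<Psi>) (G ! i # \<Phi>', \<Psi>) (X, Y) A'"
      using st_OrL[of T V w G \<Phi>' \<Psi> X Y] G by blast
    have eq: "Ss ! i = (G ! i # \<Phi>', \<Psi>)" "i < length Ss" using e i(1) by auto
    have "Good T V w' (Ss ! i) A'" "RelS r (\<Phi>, \<Psi>) (Ss ! i) (X, Y) A'"
      using i eq e(1) OrL by simp_all
    then show ?thesis using eq(2) by blast
  next
    case FixL
    then obtain f \<Phi>' where "\<Phi> = f # \<Phi>'" "is_fix f" "Ss = [(unfold f # \<Phi>', \<Psi>)]" using R by auto
    then show ?thesis using st_FixL[of T V w f \<Phi>' \<Psi> X Y] G FixL by (intro single_prem) auto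
  next
    case DiaL
    then obtain a \<Phi>' \<Psi>' where "\<Phi> = Dia a # map Box \<Phi>'" "\<Psi> = map Dia \<Psi>'" "Ss = [(a # \<Phi>', \<Psi>')]"
      using R by auto
    then show ?thesis using st_DiaL[of T V w a \<Phi>' \<Psi>' X Y] G DiaL by (intro single_prem) auto
  next
    case AndR
    then obtain G \<Psi>' where e: "\<Psi> = \<Psi>' @ [Conj G]" "Ss = map (\<lambda>g. (\<Phi>, \<Psi>' @ [g])) G" using R by auto
    then obtain i w' A' where i: "i < length G" "Good T V w' (\<Phi>, \<Psi>' @ [G ! i]) A'"
       "RelS AndR (\<Phi>, \<Psi>' @ [Conj G]) (\<Phi>, \<Psi>' @ [G ! i]) (X, Y) A'"
      using st_AndR[of T V w \<Phi> \<Psi>' G X Y] G by blast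
    have eq: "Ss ! i = (\<Phi>, \<Psi>' @ [G ! i])" "i < length Ss" using e i(1) by auto
    have "Good T V w' (Ss ! i) A'" "RelS r (\<Phi>, \<Psi>) (Ss ! i) (X, Y) A'"
      using i eq e(1) AndR by simp_all
    then show ?thesis using eq(2) by blast
  next
    case (OrR k)
    then obtain G \<Psi>' where "\<Psi> = \<Psi>' @ [Disj G]" "k < length G" "Ss = [(\<Phi>, \<Psi>' @ [G ! k])]" using R by auto
    then show ?thesis using st_OrR[of T V w \<Phi> \<Psi>' G X Y k] G OrR by (intro single_prem) auto
  next
    case FixR
    then obtain f \<Psi>' where "\<Psi> = \<Psi>' @ [f]" "is_fix f" "Ss = [(\<Phi>, \<Psi>' @ [unfold f])]" using R by auto
    then show ?thesis using st_FixR[of T V w \<Phi> \<Psi>' f X Y] G FixR by (intro single_prem) auto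
  next
    case BoxR
    then obtain a \<Phi>' \<Psi>' where "\<Phi> = map Box \<Phi>'" "\<Psi> = map Dia \<Psi>' @ [Box a]" "Ss = [(\<Phi>', \<Psi>' @ [a])]"
      using R by auto
    then show ?thesis using st_BoxR[of T V w \<Phi>' \<Psi>' a X Y] G BoxR by (intro single_prem) auto
  qed
  then show ?thesis using S A by simp
qed

lemma link_fst: "link r S oc oc' \<Longrightarrow> fst oc' = fst oc"
  by (cases r; cases S; cases oc) (auto split: if_splits)



theorem theorem3p4:
  fixes \<Phi> \<Psi> :: "'v fm list" and T :: "'n list set" and V :: "'n list \<Rightarrow> 'v \<Rightarrow> bool"
  assumes "\<forall>f\<in>set \<Phi>. lc 0 f" and "\<forall>f\<in>set \<Psi>. lc 0 f"
    and "has_coproof (\<Phi>, \<Psi>)"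
    and "tree_model T"
    and "\<forall>f\<in>set \<Phi>. holds_root T V f"
  shows "\<exists>f\<in>set \<Psi>. holds_root T V f"
proof (rule ccontr)
  assume neg: "\<not> (\<exists>f\<in>set \<Psi>. holds_root T V f)"
  from assms(3) obtain t where t: "sq t = (\<Phi>, \<Psi>)" "coproof t" unfolding has_coproof_def by blast
  have wf: "wf_tree t" using t(2) unfolding coproof_def by blast
  have ri: "rule_inst (rl s) (sq s) (map sq (kids s))" if "s \<in> subtrees t" for s
    using wf that unfolding wf_tree_def by blast
  define A0 :: "('v, 'n list set) af list \<times> ('v, 'n list set) af list" where
    "A0 = (map emb \<Phi>, map emb \<Psi>)"
  have root: "[] \<in> T" using assms(4) unfolding tree_model_def by blast
  have G0: "Good T V [] (\<Phi>, \<Psi>) A0"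
    unfolding A0_def
  proof (rule GoodI)
    show "[] \<in> T" by (rule root)
    show "map erase (map emb \<Phi> :: ('v, 'n list set) af list) = \<Phi>" by (induction \<Phi>) auto
    show "map erase (map emb \<Psi> :: ('v, 'n list set) af list) = \<Psi>" by (induction \<Psi>) auto
  next
    fix g :: "('v, 'n list set) af" assume "g \<in> set (map emb \<Phi>)"
    then obtain f where f: "f \<in> set \<Phi>" "g = emb f" by auto
    have "[] \<in> sem T V (\<lambda>_. {}) f" using assms(5) f(1) unfolding holds_root_def by blast
    then have "[] \<in> sA T V g" using f(2) semA_emb[of T V "\<lambda>_. {}" f] by simp
    then show "[] \<in> sA T V g \<and> lc 0 (erase g) \<and> okA True g"
      using assms(1) f okA_emb by auto
  next
    fix g :: "('v, 'n list set) af" assume "g \<in> set (map emb \<Psi>)"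
    then obtain f where f: "f \<in> set \<Psi>" "g = emb f" by auto
    have "[] \<notin> sem T V (\<lambda>_. {}) f" using neg f(1) unfolding holds_root_def by blast
    then have "[] \<notin> sA T V g" using f(2) semA_emb[of T V "\<lambda>_. {}" f] by simp
    then show "[] \<notin> sA T V g \<and> lc 0 (erase g) \<and> okA False g"
      using assms(2) f okA_emb by auto
  qed
  define Q where "Q x \<longleftrightarrow> fst x \<in> subtrees t \<and> Good T V (fst (snd x)) (sq (fst x)) (snd (snd x))"
    for x :: "'v dtree \<times> 'n list \<times> ('v, 'n list set) af list \<times> ('v, 'n list set) af list"
  define Nx where "Nx x y \<longleftrightarrow> fst y \<in> set (kids (fst x)) \<and>
      RelS (rl (fst x)) (sq (fst x)) (sq (fst y)) (snd (snd x)) (snd (snd y))"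
    for x y :: "'v dtree \<times> 'n list \<times> ('v, 'n list set) af list \<times> ('v, 'n list set) af list"
  have ex: "\<exists>y. Nx x y \<and> Q y" if "Q x" for x
  proof -
    obtain s w A where x: "x = (s, w, A)" by (cases x)
    have s: "s \<in> subtrees t" "Good T V w (sq s) A" using that x unfolding Q_def by auto
    from step_rule[OF ri[OF s(1)] s(2)] obtain i w' A' where
      i: "i < length (kids s)" "Good T V w' (map sq (kids s) ! i) A'"
         "RelS (rl s) (sq s) (map sq (kids s) ! i) A A'" by auto
    have k: "kids s ! i \<in> set (kids s)" using i(1) by simp
    have sub: "kids s ! i \<in> subtrees t" using subtrees.kid[OF s(1) k] .
    have "Nx x (kids s ! i, w', A') \<and> Q (kids s ! i, w', A')"
      unfolding Nx_def Q_def using x i k sub by simp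
    then show ?thesis by blast
  qed
  define f where "f = rec_nat (t, [], A0) (\<lambda>_ x. SOME y. Nx x y \<and> Q y)"
  have f0: "f 0 = (t, [], A0)" unfolding f_def by simp
  have fS: "f (Suc n) = (SOME y. Nx (f n) y \<and> Q y)" for n unfolding f_def by simp
  have Qf: "Q (f n)" for n
  proof (induction n)
    case 0 then show ?case unfolding f0 Q_def using G0 t(1) subtrees.self by simp
  next
    case (Suc n)
    then show ?case unfolding fS using someI_ex[OF ex[OF Suc]] by blast
  qed
  have Nf: "Nx (f n) (f (Suc n))" for n
    unfolding fS using someI_ex[OF ex[OF Qf[of n]]] by blast
  define b where "b n = fst (f n)" for n
  define Af where "Af n = snd (snd (f n))" for n
  have branch: "is_branch t b"
    unfolding is_branch_def b_def using f0 Nf unfolding Nx_def by simp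
  have good: "good_branch b" using t(2) branch unfolding coproof_def by blast
  then obtain k oc where tr: "is_trace b k oc" and
    side: "(fst (oc 0) \<and> mu_thread b k oc) \<or> (\<not> fst (oc 0) \<and> nu_thread b k oc)"
    unfolding good_branch_def by blast
  define l where "l = fst (oc 0)"
  have trn: "valid_occ (sq (b (k + n))) (oc n)" "link (rl (b (k + n))) (sq (b (k + n))) (oc n) (oc (Suc n))" for n
    using tr unfolding is_trace_def by auto
  have fst_oc: "fst (oc n) = l" for n
  proof (induction n)
    case 0 then show ?case unfolding l_def by simp
  next
    case (Suc n) then show ?case using link_fst[OF trn(2)[of n]] by simp
  qed
  define g where "g n = afm (Af (k + n)) (oc n)" for n
  define Pr where "Pr n \<longleftrightarrow> princ_step b k oc n" for n
  have Rel: "RelS (rl (b m)) (sq (b m)) (sq (b (Suc m))) (Af m) (Af (Suc m))" for m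
    using Nf[of m] unfolding Nx_def b_def Af_def by simp
  have stp: "if Pr n then astep l (g n) (g (Suc n)) else g (Suc n) = g n" for n
  proof -
    have v': "valid_occ (sq (b (Suc (k + n)))) (oc (Suc n))" using trn(1)[of "Suc n"] by simp
    have "if principal (rl (b (k + n))) (sq (b (k + n))) (oc n)
          then astep (fst (oc n)) (afm (Af (k + n)) (oc n)) (afm (Af (Suc (k + n))) (oc (Suc n)))
          else afm (Af (Suc (k + n))) (oc (Suc n)) = afm (Af (k + n)) (oc n)"
      using Rel[of "k + n"] trn(1)[of n] trn(2)[of n] v' unfolding RelS_def by blast
    then show ?thesis unfolding g_def Pr_def princ_step_def using fst_oc[of n] by (simp split: if_splits)
  qed
  have step: "astep l (g n) (g (Suc n))" if "Pr n" for n using stp[of n] that by simp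
  have still: "g (Suc n) = g n" if "\<not> Pr n" for n using stp[of n] that by simp
  have er: "erase (g n) = fm_at (sq (b (k + n))) (oc n)" for n
  proof -
    have Gd: "Good T V (fst (snd (f (k + n)))) (sq (b (k + n))) (Af (k + n))"
      using Qf[of "k + n"] unfolding Q_def b_def Af_def by simp
    obtain \<Phi>' \<Psi>' where S: "sq (b (k + n)) = (\<Phi>', \<Psi>')" by (cases "sq (b (k + n))")
    obtain X Y where A: "Af (k + n) = (X, Y)" by (cases "Af (k + n)")
    obtain l' j where oc: "oc n = (l', j)" by (cases "oc n")
    have m: "map erase X = \<Phi>'" "map erase Y = \<Psi>'" using GoodD[OF Gd[unfolded S A]] by auto
    have "valid_occ (\<Phi>', \<Psi>') (l', j)" using trn(1)[of n] S oc by simp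
    then show ?thesis unfolding g_def using S A oc m by auto
  qed
  have inf_eq: "inf_forms b k oc = {f. \<exists>\<^sub>\<infinity>n. Pr n \<and> erase (g n) = f}"
    unfolding inf_forms_def Pr_def er by simp
  have inf: "\<exists>\<^sub>\<infinity>n. Pr n" using side unfolding mu_thread_def nu_thread_def inf_thread_def Pr_def by blast
  from side show False
  proof (elim disjE conjE)
    assume lt: "fst (oc 0)" and mt: "mu_thread b k oc"
    then obtain a where a: "Mu a \<in> inf_forms b k oc" "\<forall>h\<in>inf_forms b k oc. h \<noteq> Mu a \<longrightarrow> rk (Mu a) < rk h"
      unfolding mu_thread_def min_is_mu_def by blast
    have lT: "l = True" using lt unfolding l_def by simp
    have fx: "fx l a = Mu a" using lT by simp
    show False
    proof (rule descent[where g=g and Pr=Pr and l=l and a=a])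
      show "\<And>n. Pr n \<Longrightarrow> astep l (g n) (g (Suc n))" by (rule step)
      show "\<And>n. \<not> Pr n \<Longrightarrow> g (Suc n) = g n" by (rule still)
      show "\<exists>\<^sub>\<infinity>n. Pr n \<and> erase (g n) = fx l a" using a(1) fx inf_eq by simp
      show "\<And>h. h \<noteq> fx l a \<Longrightarrow> (\<exists>\<^sub>\<infinity>n. Pr n \<and> erase (g n) = h) \<Longrightarrow> rk (fx l a) < rk h"
        using a(2) fx inf_eq by simp
    qed
  next
    assume lt: "\<not> fst (oc 0)" and mt: "nu_thread b k oc"
    then obtain a where a: "Nu a \<in> inf_forms b k oc" "\<forall>h\<in>inf_forms b k oc. h \<noteq> Nu a \<longrightarrow> rk (Nu a) < rk h"
      unfolding nu_thread_def min_is_nu_def by blast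
    have lT: "l = False" using lt unfolding l_def by simp
    have fx: "fx l a = Nu a" using lT by simp
    show False
    proof (rule descent[where g=g and Pr=Pr and l=l and a=a])
      show "\<And>n. Pr n \<Longrightarrow> astep l (g n) (g (Suc n))" by (rule step)
      show "\<And>n. \<not> Pr n \<Longrightarrow> g (Suc n) = g n" by (rule still)
      show "\<exists>\<^sub>\<infinity>n. Pr n \<and> erase (g n) = fx l a" using a(1) fx inf_eq by simp
      show "\<And>h. h \<noteq> fx l a \<Longrightarrow> (\<exists>\<^sub>\<infinity>n. Pr n \<and> erase (g n) = h) \<Longrightarrow> rk (fx l a) < rk h"
        using a(2) fx inf_eq by simp
    qed
  qed
qed


end
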